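(* Let $V$ be a real Hilbert space, $C\subseteq V$ nonempty closed convex, $B$ a real Banach space, $A\subseteq B$, $m\in V^*$, and let $K\colon C\to 2^C$ satisfy $(\mathcal{H}_K)$. Assume there is a bounded subset $C_0\subseteq V$ with $K(u)\cap C_0\neq\emptyset$ for all $u\in C$, and let $T\colon B\times V\times V\to\mathbb{R}$ be a trilinear form such that for some constants $\alpha,\beta>0$, $$|T(a,u,v)|\le\beta\|a\|_B\|u\|_V\|v\|_V\ \text{ for all }(a,u,v)\in B\times V\times V,\qquad T(a,v,v)\ge\alpha\|v\|_V^2\ \text{ for all }(a,v)\in A\times V.$$ Then for each $a\in A$, the set of all $u\in C$ with $u\in K(u)$ and $$T(a,u,v-u)\ge\langle m,v-u\rangle\quad\text{for all }v\in K(u)$$ is nonempty, bounded and weakly closed.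
   Context: Hypothesis $(\mathcal{H}_K)$: for every $u\in C$ the set $K(u)\subseteq C$ is nonempty, closed and convex, and (i) for any sequence $\{x_n\}\subset C$ with $x_n\rightharpoonup x$ weakly and any $y\in K(x)$ there is a sequence $\{y_n\}\subset C$ with $y_n\in K(x_n)$ and $y_n\to y$ strongly; (ii) for any sequences $\{x_n\},\{y_n\}\subset C$ with $y_n\in K(x_n)$, $x_n\rightharpoonup x$ and $y_n\rightharpoonup y$, one has $y\in K(x)$. Here $\langle\cdot,\cdot\rangle$ is the duality pairing between $V^*$ and $V$. *)

theory Defs
  imports "HOL-Analysis.Analysis"
begin

definition weak_conv :: "(nat \<Rightarrow> 'v::real_normed_vector) \<Rightarrow> 'v \<Rightarrow> bool" where
  "weak_conv x y \<longleftrightarrow>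
     (\<forall>f :: 'v \<Rightarrow> real. bounded_linear f \<longrightarrow> (\<lambda>n. f (x n)) \<longlonglongrightarrow> f y)"

definition weakly_closed :: "'v::real_normed_vector set \<Rightarrow> bool" where
  "weakly_closed S \<longleftrightarrow>
     (\<forall>x y. (\<forall>n. x n \<in> S) \<longrightarrow> weak_conv x y \<longrightarrow> y \<in> S)"

definition hyp_K :: "'v::real_normed_vector set \<Rightarrow> ('v \<Rightarrow> 'v set) \<Rightarrow> bool" where
  "hyp_K C K \<longleftrightarrow>
     (\<forall>u\<in>C. K u \<subseteq> C \<and> K u \<noteq> {} \<and> closed (K u) \<and> convex (K u)) \<and>
     (\<forall>x xl y. (\<forall>n. x n \<in> C) \<longrightarrow> xl \<in> C \<longrightarrow> weak_conv x xl \<longrightarrow> y \<in> K xl \<longrightarrow>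
        (\<exists>yn. (\<forall>n. yn n \<in> C \<and> yn n \<in> K (x n)) \<and> yn \<longlonglongrightarrow> y)) \<and>
     (\<forall>x y xl yl. (\<forall>n. x n \<in> C) \<longrightarrow> (\<forall>n. y n \<in> C) \<longrightarrow> (\<forall>n. y n \<in> K (x n)) \<longrightarrow>
        xl \<in> C \<longrightarrow> weak_conv x xl \<longrightarrow> weak_conv y yl \<longrightarrow> yl \<in> K xl)"

definition trilinear :: "('b::real_vector \<Rightarrow> 'v::real_vector \<Rightarrow> 'v \<Rightarrow> real) \<Rightarrow> bool" where
  "trilinear T \<longleftrightarrow>
     (\<forall>u v. linear (\<lambda>a. T a u v)) \<and> (\<forall>a v. linear (\<lambda>u. T a u v)) \<and>
     (\<forall>a u. linear (\<lambda>v. T a u v))"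

end

theory Submission
  imports Defs "HOL-Library.Diagonal_Subsequence" "HOL-Homology.Homology"
begin

lemma near_point:
  fixes S :: "'a::metric_space set"
  assumes "S \<noteq> {}" "e > 0"
  shows "\<exists>s\<in>S. dist x s < infdist x S + e"
proof -
  have "(INF a\<in>S. dist x a) < infdist x S + e" using infdist_notempty[OF assms(1)] assms(2) by simp
  then show ?thesis
    using assms(1) by (subst (asm) cINF_less_iff) (auto intro: bdd_belowI[of _ 0])
qed

lemma parallelogram:
  fixes a b :: "'a::real_inner"
  shows "(norm (a - b))\<^sup>2 + (norm (a + b))\<^sup>2 = 2 * (norm a)\<^sup>2 + 2 * (norm b)\<^sup>2"
  by (simp add: power2_norm_eq_inner inner_diff_left inner_diff_right inner_add_left inner_add_right inner_commute)

lemma proj_exists_min: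
  fixes S :: "'v::{real_inner,complete_space} set"
  assumes S: "closed S" "convex S" "S \<noteq> {}"
  shows "\<exists>p\<in>S. \<forall>y\<in>S. norm (x - p) \<le> norm (x - y)"
proof -
  define d where "d = infdist x S"
  have d0: "d \<ge> 0" by (simp add: d_def infdist_nonneg)
  have dle: "d \<le> norm (x - y)" if "y \<in> S" for y
    using infdist_le[OF that, of x] by (simp add: d_def dist_norm)
  define ep :: "nat \<Rightarrow> real" where "ep n = 1 / (real n + 1)" for n
  have ep0: "ep n > 0" for n by (simp add: ep_def)
  have "\<forall>n. \<exists>s\<in>S. norm (x - s) < d + ep n"
    using near_point[OF S(3) ep0] by (simp add: d_def dist_norm)
  then obtain s where s: "\<And>n. s n \<in> S" "\<And>n. norm (x - s n) < d + ep n" by metis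
  define E where "E n = 2 * d * ep n + (ep n)\<^sup>2" for n
  have sq: "(norm (x - s n))\<^sup>2 \<le> d\<^sup>2 + E n" for n
  proof -
    have "(norm (x - s n))\<^sup>2 \<le> (d + ep n)\<^sup>2"
      using s(2)[of n] by (intro power_mono) auto
    then show ?thesis by (simp add: E_def power2_eq_square algebra_simps)
  qed
  have Emono: "E n \<le> E k" if "k \<le> n" for n k
  proof -
    have "ep n \<le> ep k" using that by (simp add: ep_def frac_le)
    moreover have "ep n \<ge> 0" using ep0 less_imp_le by blast
    ultimately show ?thesis unfolding E_def using d0
      by (intro add_mono mult_left_mono power_mono) auto
  qed
  have dist_sq: "(norm (s n - s k))\<^sup>2 \<le> 2 * E n + 2 * E k" for n k
  proof -
    have mid: "(1/2) *\<^sub>R s n + (1/2) *\<^sub>R s k \<in> S"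
      using convexD[OF S(2) s(1)[of n] s(1)[of k], of "1/2" "1/2"] by simp
    have hx: "x = (1/2) *\<^sub>R x + (1/2) *\<^sub>R x" by (simp flip: scaleR_add_left)
    have "x - ((1/2) *\<^sub>R s n + (1/2) *\<^sub>R s k) = (1/2) *\<^sub>R ((x - s n) + (x - s k))"
      by (subst (1) hx) (simp add: algebra_simps)
    then have "norm ((x - s n) + (x - s k)) = 2 * norm (x - ((1/2) *\<^sub>R s n + (1/2) *\<^sub>R s k))"
      by simp
    moreover have "d \<le> norm (x - ((1/2) *\<^sub>R s n + (1/2) *\<^sub>R s k))" using dle mid by blast
    ultimately have "2 * d \<le> norm ((x - s n) + (x - s k))" by simp
    then have "(2 * d)\<^sup>2 \<le> (norm ((x - s n) + (x - s k)))\<^sup>2"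
      using d0 by (intro power_mono) auto
    then have A: "4 * d\<^sup>2 \<le> (norm ((x - s n) + (x - s k)))\<^sup>2"
      by (simp add: power_mult_distrib)
    have "(norm ((x - s n) - (x - s k)))\<^sup>2 + (norm ((x - s n) + (x - s k)))\<^sup>2
          = 2 * (norm (x - s n))\<^sup>2 + 2 * (norm (x - s k))\<^sup>2" by (rule parallelogram)
    moreover have "(x - s n) - (x - s k) = s k - s n" by simp
    ultimately have "(norm (s n - s k))\<^sup>2 = 2 * (norm (x - s n))\<^sup>2 + 2 * (norm (x - s k))\<^sup>2 - (norm ((x - s n) + (x - s k)))\<^sup>2"
      by (simp add: norm_minus_commute)
    with A sq[of n] sq[of k] show ?thesis by linarith
  qed
  have Elim: "E \<longlonglongrightarrow> 0"
  proof -
    have "ep \<longlonglongrightarrow> 0" unfolding ep_def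
      using LIMSEQ_inverse_real_of_nat by (simp add: inverse_eq_divide add.commute)
    then have "(\<lambda>n. 2 * d * ep n + (ep n)\<^sup>2) \<longlonglongrightarrow> 2 * d * 0 + 0\<^sup>2"
      by (intro tendsto_intros)
    then show ?thesis by (simp add: E_def[abs_def])
  qed
  have "Cauchy s"
  proof (rule metric_CauchyI)
    fix e :: real assume "e > 0"
    then have "e\<^sup>2 / 4 > 0" by simp
    then obtain N where N: "\<And>n. n \<ge> N \<Longrightarrow> norm (E n) < e\<^sup>2/4"
      using Elim[unfolded LIMSEQ_iff, rule_format, of "e\<^sup>2/4"] by auto
    have "dist (s m) (s n) < e" if "m \<ge> N" "n \<ge> N" for m n
    proof -
      have "E m < e\<^sup>2/4" "E n < e\<^sup>2/4" using N[of m] N[of n] that by (auto simp: abs_less_iff)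
      then have "(norm (s m - s n))\<^sup>2 < e\<^sup>2" using dist_sq[of m n] by linarith
      then show ?thesis using \<open>e > 0\<close> by (simp add: dist_norm power_less_imp_less_base less_imp_le)
    qed
    then show "\<exists>M. \<forall>m\<ge>M. \<forall>n\<ge>M. dist (s m) (s n) < e" by blast
  qed
  then obtain p where p: "s \<longlonglongrightarrow> p" using Cauchy_convergent_iff convergent_def by blast
  have pS: "p \<in> S" using S(1) s(1) p closed_sequentially by blast
  have "norm (x - p) \<le> d"
  proof (rule tendsto_le[OF sequentially_bot])
    show "(\<lambda>n. norm (x - s n)) \<longlonglongrightarrow> norm (x - p)" using p by (intro tendsto_intros)
    have "ep \<longlonglongrightarrow> 0" unfolding ep_def
      using LIMSEQ_inverse_real_of_nat by (simp add: inverse_eq_divide add.commute)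
    then show "(\<lambda>n. d + ep n) \<longlonglongrightarrow> d" using tendsto_add_const_iff[of d ep 0] by simp
    show "\<forall>\<^sub>F n in sequentially. norm (x - s n) \<le> d + ep n" using s(2) less_imp_le by (auto intro!: always_eventually)
  qed
  then show ?thesis using pS dle by force
qed

lemma min_imp_obtuse:
  fixes S :: "'v::real_inner set"
  assumes "convex S" "p \<in> S" "\<forall>y\<in>S. norm (x - p) \<le> norm (x - y)" "y \<in> S"
  shows "inner (x - p) (y - p) \<le> 0"
proof (rule ccontr)
  assume neg: "\<not> ?thesis"
  define b where "b = inner (x - p) (y - p)"
  define c where "c = (norm (y - p))\<^sup>2"
  have b0: "b > 0" using neg b_def by simp
  have c0: "c > 0" using neg unfolding c_def by (cases "y = p") auto
  define t where "t = min 1 (b / c)"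
  have t0: "t > 0" "t \<le> 1" using b0 c0 by (auto simp: t_def)
  have tc: "t * c \<le> b" using c0 by (auto simp: t_def min_def field_simps)
  have "p + t *\<^sub>R (y - p) = (1 - t) *\<^sub>R p + t *\<^sub>R y" by (simp add: algebra_simps)
  then have inS: "p + t *\<^sub>R (y - p) \<in> S" using assms(1,2,4) t0 by (metis convexD diff_ge_0_iff_ge le_add_diff_inverse2 less_imp_le)
  have "(norm (x - (p + t *\<^sub>R (y - p))))\<^sup>2 = (norm (x - p))\<^sup>2 - 2 * t * b + t\<^sup>2 * c"
    unfolding b_def c_def power2_norm_eq_inner
    by (simp add: inner_diff_left inner_diff_right inner_add_left inner_add_right inner_commute power2_eq_square algebra_simps)
  moreover have "t\<^sup>2 * c < 2 * t * b"
    using tc t0 b0 by (simp add: power2_eq_square) (smt (verit) mult_left_mono mult.assoc)?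
  ultimately have "(norm (x - (p + t *\<^sub>R (y - p))))\<^sup>2 < (norm (x - p))\<^sup>2" by linarith
  then have "norm (x - (p + t *\<^sub>R (y - p))) < norm (x - p)"
    by (meson norm_ge_zero power_less_imp_less_base)
  with assms(3) inS show False by force
qed

definition proj :: "'v::real_inner set \<Rightarrow> 'v \<Rightarrow> 'v" where
  "proj S x = (SOME p. p \<in> S \<and> (\<forall>y\<in>S. inner (x - p) (y - p) \<le> 0))"

lemma proj:
  fixes S :: "'v::{real_inner,complete_space} set"
  assumes "closed S" "convex S" "S \<noteq> {}"
  shows "proj S x \<in> S" "\<And>y. y \<in> S \<Longrightarrow> inner (x - proj S x) (y - proj S x) \<le> 0"
proof -
  obtain p where "p \<in> S" "\<forall>y\<in>S. norm (x - p) \<le> norm (x - y)" using proj_exists_min[OF assms] by blast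
  then have "\<exists>p. p \<in> S \<and> (\<forall>y\<in>S. inner (x - p) (y - p) \<le> 0)"
    using min_imp_obtuse[OF assms(2)] by blast
  then have "proj S x \<in> S \<and> (\<forall>y\<in>S. inner (x - proj S x) (y - proj S x) \<le> 0)"
    unfolding proj_def by (rule someI_ex)
  then show "proj S x \<in> S" "\<And>y. y \<in> S \<Longrightarrow> inner (x - proj S x) (y - proj S x) \<le> 0" by auto
qed

lemma proj_nonexp:
  fixes S :: "'v::{real_inner,complete_space} set"
  assumes "closed S" "convex S" "S \<noteq> {}"
  shows "norm (proj S x - proj S y) \<le> norm (x - y)"
proof -
  let ?p = "proj S x" and ?q = "proj S y"
  have 1: "inner (x - ?p) (?q - ?p) \<le> 0" using proj[OF assms] by blast
  have 2: "inner (y - ?q) (?p - ?q) \<le> 0" using proj[OF assms] by blast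
  have "(norm (?p - ?q))\<^sup>2 \<le> inner (x - y) (?p - ?q)"
    using 1 2 unfolding power2_norm_eq_inner
    by (simp add: inner_diff_left inner_diff_right inner_commute algebra_simps)
  also have "\<dots> \<le> norm (x - y) * norm (?p - ?q)" by (rule norm_cauchy_schwarz)
  finally have "(norm (?p - ?q))\<^sup>2 \<le> norm (x - y) * norm (?p - ?q)" .
  then show ?thesis
    by (cases "norm (?p - ?q) = 0") (auto simp: power2_eq_square)
qed

lemma proj_self:
  fixes S :: "'v::{real_inner,complete_space} set"
  assumes "closed S" "convex S" "x \<in> S"
  shows "proj S x = x"
proof -
  have "inner (x - proj S x) (x - proj S x) \<le> 0" using proj[OF assms(1,2)] assms(3) by blast
  then show ?thesis by (metis inner_eq_zero_iff inner_ge_zero eq_iff_diff_eq_0 order.antisym)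
qed

lemma continuous_on_proj:
  fixes S :: "'v::{real_inner,complete_space} set"
  assumes "closed S" "convex S" "S \<noteq> {}"
  shows "continuous_on U (proj S)"
  by (rule lipschitz_on_continuous_on[of 1]) (auto simp: lipschitz_on_def dist_norm proj_nonexp[OF assms])

lemma riesz:
  fixes f :: "'v::{real_inner,complete_space} \<Rightarrow> real"
  assumes f: "bounded_linear f"
  shows "\<exists>z. \<forall>x. f x = inner z x"
proof (cases "\<forall>x. f x = 0")
  case True then show ?thesis by (intro exI[of _ 0]) auto
next
  case False
  then obtain w where w: "f w \<noteq> 0" by blast
  interpret f: bounded_linear f by fact
  define N where "N = {x. f x = 0}"
  have Nsub: "subspace N" unfolding N_def subspace_def by (auto simp: f.add f.scale f.zero)
  have Ncl: "closed N" unfolding N_def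
    by (intro closed_Collect_eq continuous_intros f.continuous_on continuous_on_const)
  have Ncv: "convex N" using Nsub by (rule subspace_imp_convex)
  have Nne: "N \<noteq> {}" using Nsub subspace_0 by blast
  define p where "p = proj N w"
  define y where "y = w - p"
  have pN: "p \<in> N" using proj[OF Ncl Ncv Nne] p_def by blast
  have fy: "f y = f w" using pN by (simp add: y_def f.diff N_def)
  have orth: "inner y n = 0" if "n \<in> N" for n
  proof -
    have "p + n \<in> N" "p - n \<in> N" using pN that Nsub by (auto simp: subspace_add subspace_diff)
    then have "inner y ((p + n) - p) \<le> 0" "inner y ((p - n) - p) \<le> 0"
      using proj(2)[OF Ncl Ncv Nne] unfolding y_def p_def by blast+
    then show ?thesis by (simp add: inner_diff_right)
  qed
  have yn0: "y \<noteq> 0" using fy w by auto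
  show ?thesis
  proof (intro exI[of _ "(f y / inner y y) *\<^sub>R y"] allI)
    fix x
    have "x - (f x / f y) *\<^sub>R y \<in> N" using fy w by (simp add: N_def f.diff f.scale)
    then have "inner y (x - (f x / f y) *\<^sub>R y) = 0" by (rule orth)
    then have "inner y x = (f x / f y) * inner y y" by (simp add: inner_diff_right)
    then show "f x = inner ((f y / inner y y) *\<^sub>R y) x"
      using yn0 fy w by (simp add: field_simps)
  qed
qed

lemma weak_conv_iff:
  fixes x :: "nat \<Rightarrow> 'v::{real_inner,complete_space}"
  shows "weak_conv x y \<longleftrightarrow> (\<forall>z. (\<lambda>n. inner z (x n)) \<longlonglongrightarrow> inner z y)"
proof
  assume "weak_conv x y"
  then show "\<forall>z. (\<lambda>n. inner z (x n)) \<longlonglongrightarrow> inner z y"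
    unfolding weak_conv_def using bounded_linear_inner_right by blast
next
  assume H: "\<forall>z. (\<lambda>n. inner z (x n)) \<longlonglongrightarrow> inner z y"
  show "weak_conv x y" unfolding weak_conv_def
  proof (intro allI impI)
    fix f :: "'v \<Rightarrow> real" assume "bounded_linear f"
    then obtain z where "\<forall>x. f x = inner z x" using riesz by blast
    then show "(\<lambda>n. f (x n)) \<longlonglongrightarrow> f y" using H by simp
  qed
qed

lemma weak_conv_strong:
  fixes x :: "nat \<Rightarrow> 'v::real_normed_vector"
  assumes "x \<longlonglongrightarrow> y" shows "weak_conv x y"
  unfolding weak_conv_def using assms bounded_linear.tendsto by blast

lemma weak_conv_const: "weak_conv (\<lambda>n. y) y"
  by (rule weak_conv_strong) simp

lemma weak_conv_subseq:
  assumes "weak_conv x y" "strict_mono r" shows "weak_conv (x \<circ> r) y"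
  unfolding weak_conv_def
proof (intro allI impI)
  fix f :: "'a \<Rightarrow> real" assume "bounded_linear f"
  then have "(\<lambda>n. f (x n)) \<longlonglongrightarrow> f y" using assms(1) unfolding weak_conv_def by blast
  from LIMSEQ_subseq_LIMSEQ[OF this assms(2)] show "(\<lambda>n. f ((x \<circ> r) n)) \<longlonglongrightarrow> f y"
    by (simp add: o_def)
qed

lemma weak_conv_diff:
  assumes "weak_conv x y" "weak_conv x' y'" shows "weak_conv (\<lambda>n. x n - x' n) (y - y')"
  using assms unfolding weak_conv_def
  by (auto simp: linear_diff bounded_linear.linear intro!: tendsto_diff)

lemma weak_conv_add:
  assumes "weak_conv x y" "weak_conv x' y'" shows "weak_conv (\<lambda>n. x n + x' n) (y + y')"
  using assms unfolding weak_conv_def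
  by (auto simp: linear_add bounded_linear.linear intro!: tendsto_add)

lemma weak_conv_unique:
  fixes x :: "nat \<Rightarrow> 'v::{real_inner,complete_space}"
  assumes "weak_conv x y" "weak_conv x y'" shows "y = y'"
proof -
  have "(\<lambda>n. inner (y - y') (x n)) \<longlonglongrightarrow> inner (y - y') y"
       "(\<lambda>n. inner (y - y') (x n)) \<longlonglongrightarrow> inner (y - y') y'"
    using assms weak_conv_iff by blast+
  then have "inner (y - y') y = inner (y - y') y'" using LIMSEQ_unique by blast
  then have "inner (y - y') (y - y') = 0" by (simp add: inner_diff_right)
  then show ?thesis by simp
qed

lemma weak_limit_closed_convex:
  fixes S :: "'v::{real_inner,complete_space} set"
  assumes S: "closed S" "convex S" and x: "\<forall>n. x n \<in> S" and w: "weak_conv x y"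
  shows "y \<in> S"
proof -
  have ne: "S \<noteq> {}" using x by blast
  define p where "p = proj S y"
  have pS: "p \<in> S" using proj[OF S ne] p_def by blast
  have le: "inner (y - p) (x n - p) \<le> 0" for n using proj(2)[OF S ne] x p_def by blast
  have "(\<lambda>n. inner (y - p) (x n - p)) \<longlonglongrightarrow> inner (y - p) (y - p)"
  proof -
    have "(\<lambda>n. inner (y - p) (x n) - inner (y - p) p) \<longlonglongrightarrow> inner (y - p) y - inner (y - p) p"
      by (intro tendsto_diff tendsto_const) (use w weak_conv_iff in blast)
    then show ?thesis by (simp add: inner_diff_right)
  qed
  then have "inner (y - p) (y - p) \<le> 0"
    by (rule tendsto_upperbound) (use le in auto)
  then have "y = p" by (metis inner_eq_zero_iff inner_ge_zero eq_iff_diff_eq_0 order.antisym)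
  then show ?thesis using pS by simp
qed

lemma weakly_closed_closed_convex:
  fixes S :: "'v::{real_inner,complete_space} set"
  assumes "closed S" "convex S" shows "weakly_closed S"
  unfolding weakly_closed_def using weak_limit_closed_convex[OF assms] by blast

lemma bil_weak_left:
  fixes B :: "'v::real_normed_vector \<Rightarrow> 'v \<Rightarrow> real"
  assumes B: "bounded_bilinear B" and w: "weak_conv x y"
  shows "(\<lambda>n. B (x n) v) \<longlonglongrightarrow> B y v"
  by (rule w[unfolded weak_conv_def, rule_format, OF bounded_bilinear.bounded_linear_left[OF B]])

lemma bil_weak_right:
  fixes B :: "'v::real_normed_vector \<Rightarrow> 'v \<Rightarrow> real"
  assumes B: "bounded_bilinear B" and w: "weak_conv x y"
  shows "(\<lambda>n. B v (x n)) \<longlonglongrightarrow> B v y"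
  by (rule w[unfolded weak_conv_def, rule_format, OF bounded_bilinear.bounded_linear_right[OF B]])

lemma bil_weak_strong:
  fixes B :: "'v::real_normed_vector \<Rightarrow> 'v \<Rightarrow> real"
  assumes B: "bounded_bilinear B" and w: "weak_conv x y" and M: "\<And>n. norm (x n) \<le> M"
    and v: "v' \<longlonglongrightarrow> v"
  shows "(\<lambda>n. B (x n) (v' n)) \<longlonglongrightarrow> B y v"
proof -
  interpret B: bounded_bilinear B by fact
  obtain K where K: "\<And>a b. norm (B a b) \<le> norm a * norm b * K" "K > 0" using B.pos_bounded by blast
  have 0: "(\<lambda>n. B (x n) (v' n - v)) \<longlonglongrightarrow> 0"
  proof (rule Lim_null_comparison)
    show "\<forall>\<^sub>F n in sequentially. norm (B (x n) (v' n - v)) \<le> M * K * norm (v' n - v)"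
    proof (intro always_eventually allI)
      fix n
      have "norm (B (x n) (v' n - v)) \<le> norm (x n) * norm (v' n - v) * K" by (rule K)
      also have "\<dots> \<le> M * norm (v' n - v) * K"
        using M[of n] K(2) by (intro mult_right_mono) auto
      finally show "norm (B (x n) (v' n - v)) \<le> M * K * norm (v' n - v)" by (simp add: algebra_simps)
    qed
    have "(\<lambda>n. norm (v' n - v)) \<longlonglongrightarrow> 0" using v by (simp add: LIM_zero_iff tendsto_norm_zero)
    then show "(\<lambda>n. M * K * norm (v' n - v)) \<longlonglongrightarrow> 0" using tendsto_mult_right_zero by blast
  qed
  have "(\<lambda>n. B (x n) (v' n - v) + B (x n) v) \<longlonglongrightarrow> 0 + B y v"
    by (intro tendsto_add 0 bil_weak_left[OF B w])
  then show ?thesis by (simp add: B.diff_right)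
qed

lemma vi_limit:
  fixes B :: "'v::real_normed_vector \<Rightarrow> 'v \<Rightarrow> real"
  assumes B: "bounded_bilinear B" and pos: "\<And>w. B w w \<ge> 0"
    and m: "bounded_linear m"
    and w: "weak_conv x y" and M: "\<And>n. norm (x n) \<le> M"
    and v: "v' \<longlonglongrightarrow> v"
    and ineq: "\<And>n. B (x n) (v' n - x n) \<ge> m (v' n - x n)"
  shows "B y (v - y) \<ge> m (v - y)"
proof -
  interpret B: bounded_bilinear B by fact
  interpret m: bounded_linear m by fact
  have key: "m (v' n) - m (x n) \<le> B (x n) (v' n) - B (x n) y - B y (x n) + B y y" for n
  proof -
    have "B (x n - y) (x n - y) \<ge> 0" by (rule pos)
    then have "B (x n) (x n) \<ge> B (x n) y + B y (x n) - B y y"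
      by (simp add: B.diff_left B.diff_right)
    moreover have "B (x n) (v' n) - B (x n) (x n) \<ge> m (v' n) - m (x n)"
      using ineq[of n] by (simp add: B.diff_right m.diff)
    ultimately show ?thesis by linarith
  qed
  have L1a: "(\<lambda>n. m (x n)) \<longlonglongrightarrow> m y" using w m unfolding weak_conv_def by blast
  have L1: "(\<lambda>n. m (v' n) - m (x n)) \<longlonglongrightarrow> m v - m y"
    using m.tendsto[OF v] L1a by (rule tendsto_diff)
  have L2: "(\<lambda>n. B (x n) (v' n) - B (x n) y - B y (x n) + B y y) \<longlonglongrightarrow> B y v - B y y - B y y + B y y"
    by (intro tendsto_intros bil_weak_strong[OF B w M v] bil_weak_left[OF B w] bil_weak_right[OF B w])
  have "m v - m y \<le> B y v - B y y - B y y + B y y"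
    using L1 L2 key by (intro LIMSEQ_le) auto
  then show ?thesis by (simp add: B.diff_right m.diff)
qed

lemma proj_subspace_orth:
  fixes W :: "'v::{real_inner,complete_space} set"
  assumes "subspace W" "closed W" "w \<in> W"
  shows "inner (z - proj W z) w = 0"
proof -
  have cv: "convex W" using assms(1) by (rule subspace_imp_convex)
  have ne: "W \<noteq> {}" using assms(3) by blast
  have pW: "proj W z \<in> W" using proj[OF assms(2) cv ne] by blast
  have "proj W z + w \<in> W" "proj W z - w \<in> W" using pW assms by (auto simp: subspace_add subspace_diff)
  then have "inner (z - proj W z) ((proj W z + w) - proj W z) \<le> 0"
            "inner (z - proj W z) ((proj W z - w) - proj W z) \<le> 0"
    using proj(2)[OF assms(2) cv ne] by blast+
  then show ?thesis by (simp add: inner_diff_right)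
qed

lemma subspace_closure_my:
  fixes S :: "'a::real_normed_vector set"
  assumes S: "subspace S" shows "subspace (closure S)"
  unfolding subspace_def
proof (intro conjI ballI allI)
  show "0 \<in> closure S" using S closure_subset subspace_0 by blast
next
  fix x y assume "x \<in> closure S" "y \<in> closure S"
  then obtain a b where a: "\<forall>n. a n \<in> S" "a \<longlonglongrightarrow> x" and b: "\<forall>n. b n \<in> S" "b \<longlonglongrightarrow> y"
    unfolding closure_sequential by blast
  have "\<forall>n. a n + b n \<in> S" using a b S subspace_add by blast
  moreover have "(\<lambda>n. a n + b n) \<longlonglongrightarrow> x + y" using a b by (intro tendsto_add)
  ultimately show "x + y \<in> closure S" unfolding closure_sequential by (intro exI[of _ "\<lambda>n. a n + b n"]) simp
next
  fix c x assume "x \<in> closure S"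
  then obtain a where a: "\<forall>n. a n \<in> S" "a \<longlonglongrightarrow> x"
    unfolding closure_sequential by blast
  have "\<forall>n. c *\<^sub>R a n \<in> S" using a S subspace_mul by blast
  moreover have "(\<lambda>n. c *\<^sub>R a n) \<longlonglongrightarrow> c *\<^sub>R x" using a by (intro tendsto_scaleR tendsto_const)
  ultimately show "c *\<^sub>R x \<in> closure S" unfolding closure_sequential by (intro exI[of _ "\<lambda>n. c *\<^sub>R a n"]) simp
qed

lemma bounded_real_subseq:
  fixes s :: "nat \<Rightarrow> real"
  assumes "\<And>n. \<bar>s n\<bar> \<le> M"
  shows "\<exists>r. strict_mono r \<and> convergent (s \<circ> r)"
proof -
  obtain r where r: "strict_mono r" "monoseq (\<lambda>n. s (r n))" using seq_monosub by blast
  have "Bseq (\<lambda>n. s (r n))" using assms by (intro BseqI'[of _ M]) auto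
  then have "convergent (\<lambda>n. s (r n))" using r(2) Bseq_monoseq_convergent by blast
  then show ?thesis using r(1) by (auto simp: o_def)
qed

lemma weak_compact:
  fixes x :: "nat \<Rightarrow> 'v::{real_inner,complete_space}"
  assumes M: "\<And>n. norm (x n) \<le> M"
  shows "\<exists>r y. strict_mono r \<and> weak_conv (x \<circ> r) y"
proof -
  define P where "P k s \<longleftrightarrow> convergent (\<lambda>n. inner (x k) (x (s n)))" for k and s :: "nat \<Rightarrow> nat"
  interpret S: subseqs P
  proof
    fix k and s :: "nat \<Rightarrow> nat" assume "strict_mono s"
    have bnd: "\<bar>inner (x k) (x (s n))\<bar> \<le> M * M" for n
    proof -
      have "\<bar>inner (x k) (x (s n))\<bar> \<le> norm (x k) * norm (x (s n))" by (rule Cauchy_Schwarz_ineq2)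
      also have "\<dots> \<le> M * M" using M by (intro mult_mono) (auto intro: order_trans[OF norm_ge_zero])
      finally show ?thesis .
    qed
    obtain r where "strict_mono r" "convergent ((\<lambda>n. inner (x k) (x (s n))) \<circ> r)"
      using bounded_real_subseq[of "\<lambda>n. inner (x k) (x (s n))" "M * M"] bnd by blast
    then show "\<exists>r'. strict_mono r' \<and> P k (s \<circ> r')" by (auto simp: P_def o_def)
  qed
  define r where "r = S.diagseq"
  have r: "strict_mono r" unfolding r_def by (rule S.subseq_diagseq)
  have Pk: "convergent (\<lambda>n. inner (x k) (x (r n)))" for k
  proof -
    have "P k (S.diagseq \<circ> ((+) (Suc k)))"
      by (rule S.diagseq_holds) (auto simp: P_def o_def intro: convergent_subseq_convergent[unfolded o_def])
    then have "convergent (\<lambda>n. inner (x k) (x (r (n + Suc k))))"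
      by (simp add: P_def r_def o_def add.commute)
    then show ?thesis using convergent_ignore_initial_segment[of "\<lambda>n. inner (x k) (x (r n))" "Suc k"]
      by simp
  qed
  let ?xr = "\<lambda>n. x (r n)"
  define W where "W = closure (span (range x))"
  have Wsub: "subspace W" unfolding W_def by (rule subspace_closure_my) (rule subspace_span)
  have Wcl: "closed W" unfolding W_def by simp
  have xrW: "?xr n \<in> W" for n unfolding W_def by (meson closure_subset rangeI span_base subsetD)
  have span_conv: "convergent (\<lambda>n. inner z (?xr n))" if "z \<in> span (range x)" for z
  proof -
    have "subspace {z. convergent (\<lambda>n. inner z (?xr n))}"
      unfolding subspace_def
      by (auto simp: inner_add_left intro: convergent_add convergent_const
               dest: convergent_LIMSEQ_iff[THEN iffD1] tendsto_mult_left[where c=c for c] intro: convergentI)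
    moreover have "range x \<subseteq> {z. convergent (\<lambda>n. inner z (?xr n))}" using Pk by auto
    ultimately show ?thesis using that span_minimal by blast
  qed
  have M0: "M \<ge> 0" using M[of 0] norm_ge_zero order_trans by blast
  have bnd: "\<bar>inner z (?xr n)\<bar> \<le> norm z * M" for z n
    using Cauchy_Schwarz_ineq2[of z "?xr n"] M[of "r n"]
    by (meson mult_left_mono norm_ge_zero order_trans)
  have W_conv: "convergent (\<lambda>n. inner z (?xr n))" if zW: "z \<in> W" for z
  proof -
    have "Cauchy (\<lambda>n. inner z (?xr n))"
    proof (rule metric_CauchyI)
      fix e :: real assume e: "e > 0"
      define d where "d = e / (4 * (M + 1))"
      have d: "d > 0" using e M0 by (simp add: d_def)
      obtain w where w: "w \<in> span (range x)" "dist w z < d"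
        using zW d unfolding W_def closure_approachable by blast
      have "Cauchy (\<lambda>n. inner w (?xr n))" using span_conv[OF w(1)] convergent_Cauchy by blast
      then obtain N where N: "\<And>m n. m \<ge> N \<Longrightarrow> n \<ge> N \<Longrightarrow> dist (inner w (?xr m)) (inner w (?xr n)) < e/3"
        using e metric_CauchyD[of _ "e/3"] by (meson divide_pos_pos zero_less_numeral)
      have small: "\<bar>inner z (?xr n) - inner w (?xr n)\<bar> \<le> d * M" for n
      proof -
        have "\<bar>inner (z - w) (?xr n)\<bar> \<le> norm (z - w) * M" by (rule bnd)
        also have "\<dots> \<le> d * M" using w(2) M0 by (intro mult_right_mono) (auto simp: dist_norm norm_minus_commute)
        finally show ?thesis by (simp add: inner_diff_left)
      qed
      have dM: "d * M < e / 3"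
      proof -
        have "d * M \<le> d * (M + 1)" using d by simp
        also have "\<dots> = e / 4" using M0 by (simp add: d_def field_simps)
        finally show ?thesis using e by linarith
      qed
      show "\<exists>N. \<forall>m\<ge>N. \<forall>n\<ge>N. dist (inner z (?xr m)) (inner z (?xr n)) < e"
      proof (intro exI allI impI)
        fix m n assume "m \<ge> N" "n \<ge> N"
        then have "\<bar>inner w (?xr m) - inner w (?xr n)\<bar> < e/3" using N by (simp add: dist_real_def)
        with small[of m] small[of n] dM show "dist (inner z (?xr m)) (inner z (?xr n)) < e"
          unfolding dist_real_def by linarith
      qed
    qed
    then show ?thesis using Cauchy_convergent_iff by blast
  qed
  have all_conv: "convergent (\<lambda>n. inner z (?xr n))" for z
  proof -
    have WW: "W \<noteq> {}" using xrW by blast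
    have pW: "proj W z \<in> W" using proj[OF Wcl subspace_imp_convex[OF Wsub] WW] by blast
    have "inner z (?xr n) = inner (proj W z) (?xr n)" for n
      using proj_subspace_orth[OF Wsub Wcl xrW[of n], of z] by (simp add: inner_diff_left)
    then show ?thesis using W_conv[OF pW] by simp
  qed
  define phi where "phi z = lim (\<lambda>n. inner z (?xr n))" for z
  have phi: "(\<lambda>n. inner z (?xr n)) \<longlonglongrightarrow> phi z" for z
    unfolding phi_def using all_conv convergent_LIMSEQ_iff by blast
  have "bounded_linear phi"
  proof (rule bounded_linear_intro)
    fix a b
    have "(\<lambda>n. inner (a + b) (?xr n)) \<longlonglongrightarrow> phi a + phi b"
      unfolding inner_add_left by (intro tendsto_add phi)
    then show "phi (a + b) = phi a + phi b" using phi LIMSEQ_unique by blast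
  next
    fix c a
    have "(\<lambda>n. inner (c *\<^sub>R a) (?xr n)) \<longlonglongrightarrow> c *\<^sub>R phi a"
      unfolding inner_scaleR_left by (simp add: tendsto_mult_left phi)
    then show "phi (c *\<^sub>R a) = c *\<^sub>R phi a" using phi LIMSEQ_unique by blast
  next
    fix a
    have "\<bar>phi a\<bar> \<le> norm a * M"
      using tendsto_rabs[OF phi[of a]] bnd[of a] by (intro tendsto_upperbound) auto
    then show "norm (phi a) \<le> norm a * M" by simp
  qed
  then obtain y where y: "\<And>z. phi z = inner y z" using riesz by blast
  have "weak_conv (x \<circ> r) y" unfolding weak_conv_iff
    using phi y by (simp add: o_def inner_commute)
  then show ?thesis using r by blast
qed

lemma inner_ext:
  fixes a b :: "'v::real_inner"
  assumes "\<And>v. inner a v = inner b v" shows "a = b"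
proof -
  have "inner (a - b) (a - b) = 0" using assms[of "a - b"] by (simp add: inner_diff_left)
  then show ?thesis by simp
qed

lemma stampacchia:
  fixes B :: "'v::{real_inner,complete_space} \<Rightarrow> 'v \<Rightarrow> real" and S :: "'v set"
  assumes B: "bounded_bilinear B" and al: "\<alpha> > 0" and coer: "\<And>v. B v v \<ge> \<alpha> * (norm v)\<^sup>2"
    and m: "bounded_linear m" and S: "closed S" "convex S" "S \<noteq> {}"
  shows "\<exists>u\<in>S. \<forall>v\<in>S. B u (v - u) \<ge> m (v - u)"
proof -
  interpret B: bounded_bilinear B by fact
  obtain K where K: "\<And>a b. norm (B a b) \<le> norm a * norm b * K" "K > 0" using B.pos_bounded by blast
  define A where "A u = (SOME z. \<forall>v. B u v = inner z v)" for u
  have A: "B u v = inner (A u) v" for u v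
  proof -
    have "\<exists>z. \<forall>v. B u v = inner z v" by (rule riesz[OF B.bounded_linear_right])
    then have "\<forall>v. B u v = inner (A u) v" unfolding A_def by (rule someI_ex)
    then show ?thesis by blast
  qed
  obtain f where f: "\<And>v. m v = inner f v" using riesz[OF m] by blast
  have Adiff: "A (u - w) = A u - A w" for u w
    by (rule inner_ext) (simp add: A[symmetric] inner_diff_left B.diff_left)
  have Anorm: "norm (A u) \<le> K * norm u" for u
  proof -
    have "(norm (A u))\<^sup>2 = B u (A u)" by (simp add: A power2_norm_eq_inner)
    also have "\<dots> \<le> norm u * norm (A u) * K" using K(1)[of u "A u"] by simp
    finally have "norm (A u) * norm (A u) \<le> (K * norm u) * norm (A u)"
      by (simp add: power2_eq_square algebra_simps)
    moreover have "0 \<le> K * norm u" using K(2) by simp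
    ultimately show ?thesis
      by (cases "norm (A u) = 0") auto
  qed
  have Acoer: "inner (A u) u \<ge> \<alpha> * (norm u)\<^sup>2" for u using coer[of u] by (simp add: A)
  define K1 where "K1 = K + \<alpha>"
  have K1: "K1 > \<alpha>" "K1 > 0" "K \<le> K1" using K(2) al by (auto simp: K1_def)
  define \<rho> where "\<rho> = \<alpha> / K1\<^sup>2"
  have rho: "\<rho> > 0" using al K1 by (simp add: \<rho>_def)
  define c2 where "c2 = 1 - \<alpha>\<^sup>2 / K1\<^sup>2"
  have c2: "c2 \<ge> 0" "c2 < 1"
  proof -
    have "\<alpha>\<^sup>2 \<le> K1\<^sup>2" using K1 al by (intro power_mono) auto
    then show "c2 \<ge> 0" using K1 by (simp add: c2_def field_simps)
    show "c2 < 1" using al K1 by (simp add: c2_def)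
  qed
  define c where "c = sqrt c2"
  have c: "c \<ge> 0" "c < 1" using c2 by (auto simp: c_def real_sqrt_lt_1_iff)
  have contr: "norm (d - \<rho> *\<^sub>R A d) \<le> c * norm d" for d
  proof -
    have "(norm (d - \<rho> *\<^sub>R A d))\<^sup>2 = (norm d)\<^sup>2 - 2 * \<rho> * inner (A d) d + \<rho>\<^sup>2 * (norm (A d))\<^sup>2"
      unfolding power2_norm_eq_inner
      by (simp add: inner_diff_left inner_diff_right inner_commute power2_eq_square algebra_simps)
    also have "\<dots> \<le> (norm d)\<^sup>2 - 2 * \<rho> * (\<alpha> * (norm d)\<^sup>2) + \<rho>\<^sup>2 * (K1 * norm d)\<^sup>2"
    proof -
      have "2 * \<rho> * (\<alpha> * (norm d)\<^sup>2) \<le> 2 * \<rho> * inner (A d) d"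
        using Acoer[of d] rho by simp
      moreover have "K * norm d \<le> K1 * norm d" using K1 by (intro mult_right_mono) auto
      then have "norm (A d) \<le> K1 * norm d" using Anorm[of d] by linarith
      then have "(norm (A d))\<^sup>2 \<le> (K1 * norm d)\<^sup>2" by (intro power_mono) auto
      then have "\<rho>\<^sup>2 * (norm (A d))\<^sup>2 \<le> \<rho>\<^sup>2 * (K1 * norm d)\<^sup>2" by (simp add: mult_left_mono)
      ultimately show ?thesis by linarith
    qed
    also have "\<dots> = c2 * (norm d)\<^sup>2"
      using K1 by (simp add: c2_def \<rho>_def power2_eq_square field_simps)
    also have "\<dots> = (c * norm d)\<^sup>2" by (simp only: c_def power_mult_distrib real_sqrt_pow2[OF c2(1)])
    finally show ?thesis by (rule power2_le_imp_le) (use c in simp)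
  qed
  define G where "G u = proj S (u - \<rho> *\<^sub>R (A u - f))" for u
  have "\<forall>x y. dist (G x) (G y) \<le> c * dist x y"
  proof (intro allI)
    fix x y
    have "dist (G x) (G y) \<le> norm ((x - \<rho> *\<^sub>R (A x - f)) - (y - \<rho> *\<^sub>R (A y - f)))"
      unfolding G_def dist_norm by (rule proj_nonexp[OF S])
    also have "(x - \<rho> *\<^sub>R (A x - f)) - (y - \<rho> *\<^sub>R (A y - f)) = (x - y) - \<rho> *\<^sub>R A (x - y)"
      by (simp add: Adiff algebra_simps)
    finally show "dist (G x) (G y) \<le> c * dist x y" using contr[of "x - y"] by (simp add: dist_norm)
  qed
  then obtain u where u: "G u = u" using banach_fix_type[OF c] by blast
  have uS: "u \<in> S" using proj(1)[OF S] u unfolding G_def by metis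
  show ?thesis
  proof (intro bexI[OF _ uS] ballI)
    fix v assume "v \<in> S"
    then have "inner ((u - \<rho> *\<^sub>R (A u - f)) - u) (v - u) \<le> 0"
      using proj(2)[OF S, of v "u - \<rho> *\<^sub>R (A u - f)"] u unfolding G_def by simp
    then have "\<rho> * inner (A u - f) (v - u) \<ge> 0" by (simp add: inner_diff_left)
    then have "inner (A u - f) (v - u) \<ge> 0" using rho by (simp add: zero_le_mult_iff)
    then show "B u (v - u) \<ge> m (v - u)" by (simp add: A f inner_diff_left)
  qed
qed

lemma stampacchia_unique:
  fixes B :: "'v::real_inner \<Rightarrow> 'v \<Rightarrow> real"
  assumes B: "bounded_bilinear B" and al: "\<alpha> > 0" and coer: "\<And>v. B v v \<ge> \<alpha> * (norm v)\<^sup>2"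
    and m: "bounded_linear m"
    and u1: "u1 \<in> S" "\<forall>v\<in>S. B u1 (v - u1) \<ge> m (v - u1)"
    and u2: "u2 \<in> S" "\<forall>v\<in>S. B u2 (v - u2) \<ge> m (v - u2)"
  shows "u1 = u2"
proof -
  interpret B: bounded_bilinear B by fact
  interpret m: bounded_linear m by fact
  have "B u1 (u2 - u1) \<ge> m (u2 - u1)" "B u2 (u1 - u2) \<ge> m (u1 - u2)" using u1 u2 by auto
  moreover have "m (u1 - u2) = - m (u2 - u1)" by (metis m.neg minus_diff_eq)
  moreover have "B u2 (u1 - u2) = - B u2 (u2 - u1)" by (metis B.minus_right minus_diff_eq)
  ultimately have "B u1 (u2 - u1) - B u2 (u2 - u1) \<ge> 0" by linarith
  then have "B (u1 - u2) (u2 - u1) \<ge> 0" by (simp add: B.diff_left)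
  then have "B (u2 - u1) (u2 - u1) \<le> 0" by (metis B.minus_left minus_diff_eq neg_0_le_iff_le)
  with coer[of "u2 - u1"] al have "(norm (u2 - u1))\<^sup>2 \<le> 0"
    by (smt (verit) mult_pos_pos zero_less_power2 zero_le_power2)
  then show ?thesis by simp
qed

definition ON :: "nat \<Rightarrow> (nat \<Rightarrow> 'v::real_inner) \<Rightarrow> bool" where
  "ON n e \<longleftrightarrow> (\<forall>i<n. \<forall>j<n. inner (e i) (e j) = (if i = j then 1 else 0))"

lemma ON_inner_sum:
  assumes "ON n e" "j < n"
  shows "inner (e j) (\<Sum>i<n. c i *\<^sub>R e i) = c j"
proof -
  have "inner (e j) (\<Sum>i<n. c i *\<^sub>R e i) = (\<Sum>i<n. c i * inner (e j) (e i))"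
    by (simp add: inner_sum_right)
  also have "\<dots> = (\<Sum>i<n. if i = j then c i else 0)"
    using assms by (intro sum.cong) (auto simp: ON_def)
  also have "\<dots> = c j" using assms(2) by simp
  finally show ?thesis .
qed

lemma ON_norm_sum:
  assumes "ON n e"
  shows "(norm (\<Sum>i<n. c i *\<^sub>R e i))\<^sup>2 = (\<Sum>i<n. (c i)\<^sup>2)"
proof -
  have "(norm (\<Sum>i<n. c i *\<^sub>R e i))\<^sup>2 = inner (\<Sum>i<n. c i *\<^sub>R e i) (\<Sum>i<n. c i *\<^sub>R e i)"
    by (simp add: power2_norm_eq_inner)
  also have "\<dots> = (\<Sum>j<n. c j * inner (e j) (\<Sum>i<n. c i *\<^sub>R e i))"
    by (simp add: inner_sum_left)
  also have "\<dots> = (\<Sum>j<n. (c j)\<^sup>2)"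
    using ON_inner_sum[OF assms] by (intro sum.cong) (auto simp: power2_eq_square)
  finally show ?thesis .
qed

lemma orth_span_zero:
  fixes d :: "'v::real_inner"
  assumes "\<And>y. y \<in> S \<Longrightarrow> inner d y = 0" "d \<in> span S"
  shows "d = 0"
proof -
  have "subspace {y. inner d y = 0}" unfolding subspace_def by (auto simp: inner_add_right)
  then have "span S \<subseteq> {y. inner d y = 0}" using assms(1) by (intro span_minimal) auto
  then have "inner d d = 0" using assms(2) by auto
  then show ?thesis by simp
qed

lemma ON_expand:
  assumes "ON n e" "x \<in> span (e ` {..<n})"
  shows "x = (\<Sum>i<n. inner (e i) x *\<^sub>R e i)"
proof -
  define d where "d = x - (\<Sum>i<n. inner (e i) x *\<^sub>R e i)"
  have "d \<in> span (e ` {..<n})" unfolding d_def using assms(2)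
    by (intro span_diff span_sum span_scale) (auto intro: span_base)
  moreover have "inner d y = 0" if yin: "y \<in> e ` {..<n}" for y
  proof -
    obtain j where j: "j < n" "y = e j" using yin by auto
    have "inner (e j) d = 0" unfolding d_def using ON_inner_sum[OF assms(1) j(1)]
      by (simp add: inner_diff_right)
    then show ?thesis using j by (simp add: inner_commute)
  qed
  ultimately have "d = 0" using orth_span_zero by blast
  then show ?thesis by (simp add: d_def)
qed

lemma span_insert_span: "span (insert x (span S)) = span (insert x S)"
proof
  have 1: "span S \<subseteq> span (insert x S)" by (rule span_mono) auto
  have 2: "x \<in> span (insert x S)" by (rule span_base) simp
  show "span (insert x (span S)) \<subseteq> span (insert x S)"
    by (rule span_minimal) (use 1 2 in \<open>auto simp: subspace_span\<close>)
  show "span (insert x S) \<subseteq> span (insert x (span S))"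
    by (intro span_mono) (auto intro: span_base)
qed

lemma ON_exists:
  fixes N :: "'v::real_inner set"
  assumes "finite N"
  shows "\<exists>n e. ON n e \<and> span (e ` {..<n}) = span N"
  using assms
proof (induction rule: finite_induct)
  case empty
  show ?case by (intro exI[of _ 0]) (auto simp: ON_def)
next
  case (insert a N)
  then obtain n e where ON: "ON n e" and sp: "span (e ` {..<n}) = span N" by blast
  show ?case
  proof (cases "a \<in> span N")
    case True
    then show ?thesis using ON sp span_redundant by metis
  next
    case False
    define a' where "a' = a - (\<Sum>i<n. inner (e i) a *\<^sub>R e i)"
    have diff: "a - a' \<in> span (e ` {..<n})" unfolding a'_def
      by (simp, intro span_sum span_scale span_base) auto
    have a'0: "a' \<noteq> 0" using False diff sp by auto
    define e' where "e' = e(n := a' /\<^sub>R norm a')"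
    have orth: "inner (e j) a' = 0" if "j < n" for j
      unfolding a'_def using ON_inner_sum[OF ON that] by (simp add: inner_diff_right)
    have ON': "ON (Suc n) e'" unfolding ON_def
    proof (intro allI impI)
      fix i j assume "i < Suc n" "j < Suc n"
      then consider "i < n" "j < n" | "i = n" "j < n" | "i < n" "j = n" | "i = n" "j = n" by linarith
      then show "inner (e' i) (e' j) = (if i = j then 1 else 0)"
      proof cases
        case 1 then show ?thesis using ON by (auto simp: e'_def ON_def)
      next
        case 2 then show ?thesis using orth[of j] by (auto simp: e'_def inner_commute)
      next
        case 3 then show ?thesis using orth[of i] by (auto simp: e'_def)
      next
        case 4 then show ?thesis using a'0 by (simp add: e'_def power2_norm_eq_inner[symmetric] power2_eq_square)
      qed
    qed
    have img: "e' ` {..<Suc n} = insert (a' /\<^sub>R norm a') (e ` {..<n})"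
      by (auto simp: e'_def lessThan_Suc image_def)
    have "span (e' ` {..<Suc n}) = span (insert (a' /\<^sub>R norm a') (span (e ` {..<n})))"
      unfolding img by (rule span_insert_span[symmetric])
    also have "\<dots> = span (insert a' (span (e ` {..<n})))"
    proof -
      let ?E = "span (e ` {..<n})" and ?b = "a' /\<^sub>R norm a'"
      have E1: "?E \<subseteq> span (insert a' ?E)" "?E \<subseteq> span (insert ?b ?E)"
        by (auto intro: span_base)
      have b1: "?b \<in> span (insert a' ?E)" by (intro span_scale span_base) simp
      have "a' = norm a' *\<^sub>R ?b" using a'0 by simp
      moreover have "norm a' *\<^sub>R ?b \<in> span (insert ?b ?E)" by (intro span_scale span_base) simp
      ultimately have a1: "a' \<in> span (insert ?b ?E)" by simp
      have "span (insert ?b ?E) \<subseteq> span (insert a' ?E)"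
        by (rule span_minimal) (use E1 b1 in \<open>auto simp: subspace_span\<close>)
      moreover have "span (insert a' ?E) \<subseteq> span (insert ?b ?E)"
        by (rule span_minimal) (use E1 a1 in \<open>auto simp: subspace_span\<close>)
      ultimately show ?thesis by blast
    qed
    also have "\<dots> = span (insert a (span (e ` {..<n})))"
      by (rule eq_span_insert_eq) (use diff in \<open>auto simp: span_span intro: span_neg[of "a - a'", simplified]\<close>)
    also have "\<dots> = span (insert a N)" by (simp add: sp span_insert_span)
    finally show ?thesis using ON' by blast
  qed
qed

lemma sphere_homeo:
  fixes e :: "nat \<Rightarrow> 'v::real_inner"
  assumes ON: "ON (Suc k) e"
  shows "top_of_set (span (e ` {..<Suc k}) \<inter> sphere 0 1) homeomorphic_space nsphere k"
proof -
  let ?F = "span (e ` {..<Suc k})"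
  let ?S = "?F \<inter> sphere 0 1"
  define f where "f x = (\<lambda>i. if i \<le> k then inner (e i) x else 0)" for x
  define g where "g y = (\<Sum>i<Suc k. y i *\<^sub>R e i)" for y :: "nat \<Rightarrow> real"
  have topS: "topspace (nsphere k) = {x. (\<Sum>i\<le>k. (x i)\<^sup>2) = 1 \<and> (\<forall>i>k. x i = 0)}"
    by (simp add: nsphere)
  have exp: "x = g (f x)" if "x \<in> ?F" for x
    using ON_expand[OF ON that] by (simp add: g_def f_def lessThan_Suc_atMost[symmetric] less_Suc_eq_le)
  have normf: "(\<Sum>i\<le>k. (f x i)\<^sup>2) = (norm x)\<^sup>2" if "x \<in> ?F" for x
  proof -
    have "(norm x)\<^sup>2 = (norm (g (f x)))\<^sup>2" using exp[OF that] by simp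
    also have "\<dots> = (\<Sum>i<Suc k. (f x i)\<^sup>2)" unfolding g_def by (rule ON_norm_sum[OF ON])
    finally show ?thesis by (simp add: lessThan_Suc_atMost)
  qed
  have gF: "g y \<in> ?F" for y unfolding g_def by (intro span_sum span_scale span_base) auto
  have normg: "(norm (g y))\<^sup>2 = (\<Sum>i\<le>k. (y i)\<^sup>2)" for y
    unfolding g_def ON_norm_sum[OF ON] by (simp add: lessThan_Suc_atMost)
  have fg: "f (g y) = y" if "y \<in> topspace (nsphere k)" for y
  proof
    fix i show "f (g y) i = y i"
    proof (cases "i \<le> k")
      case True
      then show ?thesis unfolding f_def g_def using ON_inner_sum[OF ON, of i y] by simp
    next
      case False then show ?thesis using that by (simp add: f_def topS)
    qed
  qed
  have cf: "continuous_map (top_of_set ?S) (nsphere k) f"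
    unfolding nsphere continuous_map_in_subtopology
  proof
    show "continuous_map (top_of_set ?S) (powertop_real UNIV) f"
      unfolding continuous_map_componentwise_UNIV
    proof
      fix i
      show "continuous_map (top_of_set ?S) euclideanreal (\<lambda>x. f x i)"
        by (cases "i \<le> k") (auto simp: f_def intro!: continuous_intros)
    qed
    show "f \<in> topspace (top_of_set ?S) \<rightarrow> {x. (\<Sum>i\<le>k. (x i)\<^sup>2) = 1 \<and> (\<forall>i>k. x i = 0)}"
      using normf by (auto simp: f_def)
  qed
  have cg: "continuous_map (nsphere k) (top_of_set ?S) g"
    unfolding continuous_map_in_subtopology
  proof
    show "continuous_map (nsphere k) euclidean g"
      unfolding g_def
    proof (intro continuous_map_sum)
      fix i
      have "continuous_map euclideanreal euclidean (\<lambda>t. t *\<^sub>R e i)"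
        by (simp add: continuous_intros)
      from continuous_map_compose[OF continuous_map_nsphere_projection[of k i] this]
      show "continuous_map (nsphere k) euclidean (\<lambda>x. x i *\<^sub>R e i)"
        by (simp add: o_def)
    qed simp
    show "g \<in> topspace (nsphere k) \<rightarrow> ?S"
    proof
      fix y assume "y \<in> topspace (nsphere k)"
      then have "(norm (g y))\<^sup>2 = 1" using normg topS by simp
      then have "norm (g y) = 1 \<or> norm (g y) = -1" by (simp add: power2_eq_1_iff)
      then have "norm (g y) = 1" using norm_ge_zero[of "g y"] by linarith
      then show "g y \<in> ?S" using gF by simp
    qed
  qed
  have "homeomorphic_maps (top_of_set ?S) (nsphere k) f g"
    unfolding homeomorphic_maps_def using cf cg exp fg by auto
  then show ?thesis unfolding homeomorphic_space_def by blast
qed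

lemma ball_brouwer:
  fixes e :: "nat \<Rightarrow> 'v::real_inner"
  assumes ON: "ON (Suc k) e"
    and hc: "continuous_on (span (e ` {..<Suc k}) \<inter> cball 0 1) h"
    and hi: "h ` (span (e ` {..<Suc k}) \<inter> cball 0 1) \<subseteq> span (e ` {..<Suc k}) \<inter> cball 0 1"
  shows "\<exists>x\<in>span (e ` {..<Suc k}) \<inter> cball 0 1. h x = x"
proof (rule ccontr)
  assume nofix: "\<not> ?thesis"
  let ?F = "span (e ` {..<Suc k})"
  let ?B = "?F \<inter> cball 0 1" and ?S = "?F \<inter> sphere 0 1"
  define v where "v x = x - h x" for x
  define a where "a x = inner (v x) (v x)" for x
  define b where "b x = inner x (v x)" for x
  define c where "c x = 1 - inner x x" for x :: 'v
  define t where "t x = (sqrt ((b x)\<^sup>2 + a x * c x) - b x) / a x" for x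
  define r where "r x = x + t x *\<^sub>R v x" for x
  have a0: "a x > 0" if "x \<in> ?B" for x
  proof -
    have "h x \<noteq> x" using nofix that by blast
    then show ?thesis by (simp add: a_def v_def)
  qed
  have c0: "c x \<ge> 0" if "x \<in> ?B" for x
  proof -
    have "norm x \<le> 1" using that by simp
    then have "(norm x)\<^sup>2 \<le> 1" by (simp add: power_le_one)
    then show ?thesis by (simp add: c_def power2_norm_eq_inner)
  qed
  have disc: "(b x)\<^sup>2 + a x * c x \<ge> 0" if "x \<in> ?B" for x
    using a0[OF that] c0[OF that] by (simp add: less_imp_le)
  have rnorm: "norm (r x) = 1" if xB: "x \<in> ?B" for x
  proof -
    let ?s = "sqrt ((b x)\<^sup>2 + a x * c x)"
    have s2: "?s\<^sup>2 = (b x)\<^sup>2 + a x * c x" using disc[OF xB] by simp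
    have rr: "inner (r x) (r x) = inner x x + 2 * t x * b x + (t x)\<^sup>2 * a x"
      unfolding r_def a_def b_def
      by (simp add: inner_add_left inner_add_right inner_commute power2_eq_square algebra_simps)
    have cc: "2 * t x * b x + (t x)\<^sup>2 * a x = c x"
    proof -
      have "2 * t x * b x + (t x)\<^sup>2 * a x = ((?s - b x)\<^sup>2 + 2 * b x * (?s - b x)) / a x"
        using a0[OF xB] by (simp add: t_def power2_eq_square field_simps)
      also have "\<dots> = (?s\<^sup>2 - (b x)\<^sup>2) / a x" by (simp add: power2_eq_square algebra_simps)
      also have "\<dots> = c x" using a0[OF xB] s2 by simp
      finally show ?thesis .
    qed
    have "inner (r x) (r x) = 1" using rr cc by (simp add: c_def)
    then show ?thesis by (simp add: norm_eq_sqrt_inner)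
  qed
  have rF: "r x \<in> ?F" if "x \<in> ?B" for x
  proof -
    have "h x \<in> ?F" using hi that by blast
    then show ?thesis using that unfolding r_def v_def by (intro span_add span_scale span_diff) auto
  qed
  have rid: "r x = x" if xS: "x \<in> ?S" for x
  proof -
    have xB: "x \<in> ?B" using xS by auto
    have n1: "norm x = 1" using xS by simp
    have "norm (h x) \<le> 1" using hi xB by (auto simp: image_subset_iff)
    then have "inner x (h x) \<le> 1" using norm_cauchy_schwarz[of x "h x"] n1 by simp
    moreover have "inner x x = 1" using n1 by (simp add: norm_eq_sqrt_inner)
    ultimately have b0: "b x \<ge> 0" by (simp add: b_def v_def inner_diff_right)
    have "c x = 0" using \<open>inner x x = 1\<close> by (simp add: c_def)
    then have "t x = 0" using b0 by (simp add: t_def)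
    then show ?thesis by (simp add: r_def)
  qed
  have rc: "continuous_on ?B r"
  proof -
    have vc: "continuous_on ?B v" unfolding v_def by (intro continuous_intros hc)
    have "continuous_on ?B t" unfolding t_def a_def b_def c_def
      using a0 unfolding a_def by (intro continuous_intros vc) auto
    then show ?thesis unfolding r_def by (intro continuous_intros vc)
  qed
  have "retraction_map (top_of_set ?B) (top_of_set ?S) r"
    unfolding retraction_map_def retraction_maps_def
  proof (intro exI[of _ id] conjI)
    show "continuous_map (top_of_set ?B) (top_of_set ?S) r"
      using rc rnorm rF by auto
    show "continuous_map (top_of_set ?S) (top_of_set ?B) id" by auto
    show "\<forall>x\<in>topspace (top_of_set ?S). r (id x) = x" using rid by auto
  qed
  moreover have "contractible_space (top_of_set ?B)"
  proof -
    have "convex ?B" by (intro convex_Int subspace_imp_convex subspace_span convex_cball)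
    then show ?thesis by (simp add: convex_imp_contractible)
  qed
  ultimately have "contractible_space (top_of_set ?S)" by (rule contractible_space_retraction_map_image)
  then have "contractible_space (nsphere k)"
    using homeomorphic_space_contractibility[OF sphere_homeo[OF ON]] by blast
  then show False using non_contractible_space_nsphere by blast
qed

lemma brouwer_hull:
  fixes N :: "'v::{real_inner,complete_space} set"
  assumes N: "finite N" "N \<noteq> {}" and gc: "continuous_on (convex hull N) g"
    and gi: "g ` (convex hull N) \<subseteq> convex hull N"
  shows "\<exists>x\<in>convex hull N. g x = x"
proof -
  let ?P = "convex hull N"
  obtain n e where ON: "ON n e" and sp: "span (e ` {..<n}) = span N" using ON_exists[OF N(1)] by blast
  have Pcomp: "compact ?P" using N(1) by (rule finite_imp_compact_convex_hull)
  have Pcl: "closed ?P" using Pcomp compact_imp_closed by blast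
  have Pcv: "convex ?P" by simp
  have Pne: "?P \<noteq> {}" using N(2) by simp
  have PF: "?P \<subseteq> span N" by (rule convex_hull_subset_span)
  show ?thesis
  proof (cases n)
    case 0
    then have "span N = {0}" using sp by simp
    then have "?P \<subseteq> {0}" using PF by blast
    then have "?P = {0}" using Pne by blast
    then show ?thesis using gi by auto
  next
    case (Suc k)
    obtain R where R: "R > 0" "\<And>x. x \<in> ?P \<Longrightarrow> norm x \<le> R"
      using compact_imp_bounded[OF Pcomp] bounded_pos by blast
    let ?F = "span (e ` {..<Suc k})"
    let ?B = "?F \<inter> cball 0 1"
    define h where "h x = (1 / R) *\<^sub>R g (proj ?P (R *\<^sub>R x))" for x
    have projP: "proj ?P y \<in> ?P" for y using proj(1)[OF Pcl Pcv Pne] by blast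
    have hc: "continuous_on ?B h"
    proof -
      have "continuous_on ?B (\<lambda>x. proj ?P (R *\<^sub>R x))"
        by (intro continuous_on_compose2[OF continuous_on_proj[OF Pcl Pcv Pne]] continuous_intros) auto
      moreover have "(\<lambda>x. proj ?P (R *\<^sub>R x)) ` ?B \<subseteq> ?P" using projP by auto
      ultimately have "continuous_on ?B (\<lambda>x. g (proj ?P (R *\<^sub>R x)))"
        using continuous_on_compose2[OF gc] by blast
      then show ?thesis unfolding h_def by (intro continuous_intros)
    qed
    have hi: "h ` ?B \<subseteq> ?B"
    proof
      fix y assume "y \<in> h ` ?B"
      then obtain x where y: "y = h x" by blast
      have gP: "g (proj ?P (R *\<^sub>R x)) \<in> ?P" using gi projP by blast
      then have "g (proj ?P (R *\<^sub>R x)) \<in> ?F" using PF sp Suc by auto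
      then have "y \<in> ?F" unfolding y h_def by (intro span_scale)
      moreover have "norm y \<le> 1" using R gP unfolding y h_def by (simp add: field_simps)
      ultimately show "y \<in> ?B" by simp
    qed
    obtain x where x: "x \<in> ?B" "h x = x" using ball_brouwer[OF ON[unfolded Suc] hc hi] by blast
    define y where "y = R *\<^sub>R x"
    have "g (proj ?P y) = y" using x(2) R unfolding h_def y_def
      by (metis (no_types, lifting) divide_inverse_commute inverse_eq_divide less_numeral_extra(3) 
          mult_1 scaleR_scaleR divideR_right scaleR_one)
    then have yP: "y \<in> ?P" using gi projP by (metis image_subset_iff)
    then have "proj ?P y = y" using proj_self[OF Pcl Pcv] by blast
    then show ?thesis using \<open>g (proj ?P y) = y\<close> yP by auto
  qed
qed

definition rho :: "(nat \<Rightarrow> 'v::real_inner) \<Rightarrow> 'v \<Rightarrow> real" where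
  "rho e z = (suminf (\<lambda>k. (1/2)^k * \<bar>inner (e k) z\<bar>))"

context
  fixes e :: "nat \<Rightarrow> 'v::real_inner" and R :: real
  assumes eb: "\<And>k. norm (e k) \<le> R"
begin

lemma R0: "R \<ge> 0" using eb[of 0] norm_ge_zero order_trans by blast

lemma term_bound: "(1/2)^k * \<bar>inner (e k) z\<bar> \<le> (R * norm z) * (1/2)^k"
proof -
  have "\<bar>inner (e k) z\<bar> \<le> norm (e k) * norm z" by (rule Cauchy_Schwarz_ineq2)
  also have "\<dots> \<le> R * norm z" using eb[of k] by (intro mult_right_mono) auto
  finally show ?thesis by (simp add: mult.commute)
qed

lemma rho_summable: "summable (\<lambda>k. (1/2)^k * \<bar>inner (e k) z\<bar>)"
proof (rule summable_comparison_test)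
  show "\<exists>N. \<forall>n\<ge>N. norm ((1/2)^n * \<bar>inner (e n) z\<bar>) \<le> (R * norm z) * (1/2)^n"
    using term_bound by auto
  show "summable (\<lambda>n. (R * norm z) * (1/2::real)^n)" by (intro summable_mult) simp
qed

lemma rho_nonneg: "rho e z \<ge> 0"
  unfolding rho_def by (intro suminf_nonneg rho_summable) auto

lemma rho_add: "rho e (a + b) \<le> rho e a + rho e b"
proof -
  have "rho e a + rho e b = (suminf (\<lambda>k. (1/2)^k * \<bar>inner (e k) a\<bar> + (1/2)^k * \<bar>inner (e k) b\<bar>))"
    unfolding rho_def by (intro suminf_add rho_summable)
  moreover have "rho e (a + b) \<le> (suminf (\<lambda>k. (1/2)^k * \<bar>inner (e k) a\<bar> + (1/2)^k * \<bar>inner (e k) b\<bar>))"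
    unfolding rho_def
  proof (rule suminf_le)
    fix k
    have "\<bar>inner (e k) (a + b)\<bar> \<le> \<bar>inner (e k) a\<bar> + \<bar>inner (e k) b\<bar>"
      by (simp add: inner_add_right abs_triangle_ineq)
    then show "(1/2)^k * \<bar>inner (e k) (a + b)\<bar> \<le> (1/2)^k * \<bar>inner (e k) a\<bar> + (1/2)^k * \<bar>inner (e k) b\<bar>"
      by (simp add: distrib_left[symmetric] mult_left_mono)
    show "summable (\<lambda>k. (1/2)^k * \<bar>inner (e k) (a + b)\<bar>)" by (rule rho_summable)
    show "summable (\<lambda>k. (1/2::real)^k * \<bar>inner (e k) a\<bar> + (1/2)^k * \<bar>inner (e k) b\<bar>)"
      by (intro summable_add rho_summable)
  qed
  ultimately show ?thesis by simp
qed

lemma rho_scale: "rho e (c *\<^sub>R a) = \<bar>c\<bar> * rho e a"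
proof -
  have "rho e (c *\<^sub>R a) = (suminf (\<lambda>k. \<bar>c\<bar> * ((1/2)^k * \<bar>inner (e k) a\<bar>)))"
    unfolding rho_def by (simp add: abs_mult mult.left_commute)
  also have "\<dots> = \<bar>c\<bar> * rho e a" unfolding rho_def by (intro suminf_mult rho_summable)
  finally show ?thesis .
qed

lemma rho_minus: "rho e (- a) = rho e a"
  using rho_scale[of "-1" a] by simp

lemma rho_commute: "rho e (a - b) = rho e (b - a)"
  using rho_minus[of "a - b"] by simp

lemma rho_diff: "rho e (a - b) \<le> rho e a + rho e b"
  using rho_add[of a "- b"] rho_minus[of b] by simp

lemma rho_zero_vec [simp]: "rho e 0 = 0"
  using rho_scale[of 0 0] by simp

lemma rho_sum:
  assumes "finite A" shows "rho e (sum f A) \<le> (\<Sum>i\<in>A. rho e (f i))"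
  using assms
proof (induction rule: finite_induct)
  case empty then show ?case by simp
next
  case (insert x A)
  then show ?case using rho_add[of "f x" "sum f A"] by simp
qed

lemma rho_bound: "rho e z \<le> 2 * R * norm z"
proof -
  have "rho e z \<le> (suminf (\<lambda>k. (R * norm z) * (1/2)^k))"
    unfolding rho_def
    by (rule suminf_le[OF term_bound rho_summable]) (intro summable_mult, simp)
  also have "\<dots> = (R * norm z) * (suminf (\<lambda>k. (1/2::real)^k))" by (intro suminf_mult) simp
  also have "(suminf (\<lambda>k. (1/2::real)^k)) = 2" using suminf_geometric[of "1/2::real"] by simp
  finally show ?thesis by simp
qed

lemma rho_zero: assumes "rho e z = 0" shows "inner (e k) z = 0"
proof -
  have "\<forall>n. (1/2::real)^n * \<bar>inner (e n) z\<bar> = 0"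
    using suminf_eq_zero_iff[OF rho_summable[of z]] assms unfolding rho_def by simp
  then show ?thesis by auto
qed

lemma rho_weak:
  assumes M: "\<And>n. norm (z n) \<le> M" and w: "weak_conv z 0"
  shows "(\<lambda>n. rho e (z n)) \<longlonglongrightarrow> 0"
proof (rule order_tendstoI)
  fix a :: real assume "a < 0"
  then show "\<forall>\<^sub>F n in sequentially. a < rho e (z n)" using rho_nonneg by (intro always_eventually allI) (meson less_le_trans)
next
  fix eps :: real assume eps: "eps > 0"
  have M0: "M \<ge> 0" using M[of 0] norm_ge_zero order_trans by blast
  define C where "C = 2 * R * M + 1"
  have "2 * R * M \<ge> 0" using R0 M0 by simp
  then have C: "C > 0" unfolding C_def by linarith
  obtain N where N: "(1/2::real)^N < eps / (2 * C)"
    using real_arch_pow_inv[of "eps / (2 * C)" "1/2::real"] eps C by auto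
  define f where "f n k = (1/2)^k * \<bar>inner (e k) (z n)\<bar>" for n k
  have head: "(\<lambda>n. \<Sum>k<N. f n k) \<longlonglongrightarrow> (\<Sum>k<N. 0)"
  proof (intro tendsto_sum)
    fix k
    have "(\<lambda>n. inner (e k) (z n)) \<longlonglongrightarrow> inner (e k) 0"
      by (rule w[unfolded weak_conv_def, rule_format, OF bounded_linear_inner_right])
    then have "(\<lambda>n. \<bar>inner (e k) (z n)\<bar>) \<longlonglongrightarrow> 0" by (simp add: tendsto_rabs_zero)
    then show "(\<lambda>n. f n k) \<longlonglongrightarrow> 0" unfolding f_def by (rule tendsto_mult_right_zero)
  qed
  then have ev: "\<forall>\<^sub>F n in sequentially. (\<Sum>k<N. f n k) < eps / 2"
    using eps by (intro order_tendstoD) auto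
  have le: "rho e (z n) \<le> (\<Sum>k<N. f n k) + eps / 2" for n
  proof -
    have sf: "summable (f n)" unfolding f_def by (rule rho_summable)
    have "rho e (z n) = (suminf (\<lambda>i. f n (i + N))) + (\<Sum>k<N. f n k)"
      unfolding rho_def f_def[symmetric] by (rule suminf_split_initial_segment[OF sf])
    moreover have "(suminf (\<lambda>i. f n (i + N))) \<le> eps / 2"
    proof -
      have "(suminf (\<lambda>i. f n (i + N))) \<le> (suminf (\<lambda>i. ((1/2)^N * (R * M)) * (1/2)^i))"
      proof (rule suminf_le)
        fix i
        have "f n (i + N) \<le> (R * norm (z n)) * (1/2)^(i + N)" unfolding f_def by (rule term_bound)
        also have "\<dots> \<le> (R * M) * (1/2)^(i + N)"
          using M[of n] R0 by (intro mult_right_mono mult_left_mono) auto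
        finally show "f n (i + N) \<le> ((1/2)^N * (R * M)) * (1/2)^i" by (simp add: power_add mult_ac)
        show "summable (\<lambda>i. f n (i + N))" by (rule summable_ignore_initial_segment[OF sf])
        show "summable (\<lambda>i. ((1/2)^N * (R * M)) * (1/2::real)^i)" by (intro summable_mult) simp
      qed
      also have "\<dots> = ((1/2)^N * (R * M)) * (suminf (\<lambda>i. (1/2::real)^i))" by (intro suminf_mult) simp
      also have "(suminf (\<lambda>i. (1/2::real)^i)) = 2" using suminf_geometric[of "1/2::real"] by simp
      also have "((1/2)^N * (R * M)) * 2 \<le> (1/2)^N * C" using R0 M0 by (simp add: C_def)
      also have "\<dots> \<le> eps / (2 * C) * C" using N C by (intro mult_right_mono) auto
      also have "\<dots> = eps / 2" using C by simp
      finally show ?thesis .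
    qed
    ultimately show ?thesis by linarith
  qed
  show "\<forall>\<^sub>F n in sequentially. rho e (z n) < eps"
    using ev
  proof (rule eventually_mono)
    fix n assume "(\<Sum>k<N. f n k) < eps / 2"
    then show "rho e (z n) < eps" using le[of n] by linarith
  qed
qed

end

fun Qs :: "('v::real_vector \<Rightarrow> 'v) \<Rightarrow> 'v \<Rightarrow> nat \<Rightarrow> 'v set" where
  "Qs F d 0 = {d}"
| "Qs F d (Suc k) = Qs F d k \<union> F ` Qs F d k \<union>
     (\<lambda>(q, r, t). (1 - t) *\<^sub>R q + t *\<^sub>R r) ` (Qs F d k \<times> Qs F d k \<times> (\<rat> \<inter> {0..1}))"

lemma Qs_mono: "k \<le> l \<Longrightarrow> Qs F d k \<subseteq> Qs F d l"
  by (rule lift_Suc_mono_le[of "Qs F d"]) auto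

lemma Qs_countable: "countable (Qs F d k)"
proof (induction k)
  case 0 then show ?case by simp
next
  case (Suc k)
  have "countable (\<rat> \<inter> {0..1::real})" using countable_rat by (rule countable_subset[rotated]) auto
  then show ?case using Suc by (simp add: countable_SIGMA)
qed

lemma Qs_sub:
  assumes "d \<in> D" "F ` D \<subseteq> D" "convex D" shows "Qs F d k \<subseteq> D"
proof (induction k)
  case 0 then show ?case using assms by simp
next
  case (Suc k)
  have cb: "(1 - t) *\<^sub>R q + t *\<^sub>R r \<in> D" if "q \<in> D" "r \<in> D" "0 \<le> t" "t \<le> 1" for q r t
    using assms(3) that by (intro convexD) auto
  have A: "F ` Qs F d k \<subseteq> D" using Suc assms(2) by blast
  have B: "(\<lambda>(q, r, t). (1 - t) *\<^sub>R q + t *\<^sub>R r) ` (Qs F d k \<times> Qs F d k \<times> (\<rat> \<inter> {0..1})) \<subseteq> D"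
    using Suc by (force intro: cb)
  show ?case using Suc A B by simp
qed

lemma rat_approx:
  fixes u :: real assumes "0 \<le> u" "u \<le> 1"
  obtains t where "\<And>n. t n \<in> \<rat>" "\<And>n. 0 \<le> t n" "\<And>n. t n \<le> 1" "t \<longlonglongrightarrow> u"
proof -
  define t where "t n = of_int \<lfloor>u * real (Suc n)\<rfloor> / real (Suc n)" for n
  have 1: "t n \<in> \<rat>" for n unfolding t_def by (intro Rats_divide Rats_of_int Rats_of_nat)
  have fl: "u * real (Suc n) - 1 < of_int \<lfloor>u * real (Suc n)\<rfloor>" "of_int \<lfloor>u * real (Suc n)\<rfloor> \<le> u * real (Suc n)" for n
    by linarith+
  have lo: "u - 1 / real (Suc n) \<le> t n" for n
  proof -
    have "(u * real (Suc n) - 1) / real (Suc n) \<le> of_int \<lfloor>u * real (Suc n)\<rfloor> / real (Suc n)"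
      by (intro divide_right_mono) (use fl(1)[of n] in auto)
    then show ?thesis by (simp add: t_def diff_divide_distrib)
  qed
  have hi: "t n \<le> u" for n
  proof -
    have "of_int \<lfloor>u * real (Suc n)\<rfloor> / real (Suc n) \<le> (u * real (Suc n)) / real (Suc n)"
      by (intro divide_right_mono) (use fl(2)[of n] in auto)
    then show ?thesis by (simp add: t_def)
  qed
  have 2: "0 \<le> t n" for n
  proof -
    have "0 \<le> u * real (Suc n)" using assms by simp
    then have "0 \<le> \<lfloor>u * real (Suc n)\<rfloor>" by simp
    then show ?thesis by (simp add: t_def)
  qed
  have 3: "t n \<le> 1" for n using hi[of n] assms by simp
  have "(\<lambda>n. u - 1 / real (Suc n)) \<longlonglongrightarrow> u - 0"
    by (intro tendsto_diff tendsto_const) (use LIMSEQ_inverse_real_of_nat in \<open>simp add: inverse_eq_divide\<close>)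
  then have 4: "t \<longlonglongrightarrow> u" using lo hi by (intro tendsto_sandwich[of "\<lambda>n. u - 1 / real (Suc n)" t sequentially "\<lambda>n. u"]) auto
  show ?thesis using 1 2 3 4 that by blast
qed

lemma sep_reduction:
  fixes F :: "'v::{real_inner,complete_space} \<Rightarrow> 'v"
  assumes D: "closed D" "convex D" "d \<in> D" and inv: "F ` D \<subseteq> D"
    and wc: "\<And>x y. (\<forall>n. x n \<in> D) \<Longrightarrow> y \<in> D \<Longrightarrow> weak_conv x y \<Longrightarrow> weak_conv (\<lambda>n. F (x n)) (F y)"
  shows "\<exists>Q. countable Q \<and> Q \<noteq> {} \<and> Q \<subseteq> D \<and> convex (closure Q) \<and> F ` closure Q \<subseteq> closure Q"
proof -
  define Q where "Q = (\<Union>k. Qs F d k)"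
  have Qc: "countable Q" unfolding Q_def by (intro countable_UN Qs_countable) auto
  have Qne: "Q \<noteq> {}" unfolding Q_def by (metis Qs.simps(1) UNIV_I UN_iff empty_iff insertI1)
  have QD: "Q \<subseteq> D" unfolding Q_def using Qs_sub[OF D(3) inv D(2)] by blast
  have cQD: "closure Q \<subseteq> D" using QD D(1) closure_minimal by blast
  have FQ: "F q \<in> Q" if hq: "q \<in> Q" for q
  proof -
    obtain k where "q \<in> Qs F d k" using hq Q_def by blast
    then have "F q \<in> Qs F d (Suc k)" by simp
    then show ?thesis unfolding Q_def by blast
  qed
  have comb: "(1 - t) *\<^sub>R q + t *\<^sub>R r \<in> Q" if hh: "q \<in> Q" "r \<in> Q" "t \<in> \<rat>" "0 \<le> t" "t \<le> 1" for q r t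
  proof -
    obtain k l where "q \<in> Qs F d k" "r \<in> Qs F d l" using hh Q_def by blast
    then have "q \<in> Qs F d (max k l)" "r \<in> Qs F d (max k l)" using Qs_mono[of k "max k l" F d] Qs_mono[of l "max k l" F d] by auto
    then have "(q, r, t) \<in> Qs F d (max k l) \<times> Qs F d (max k l) \<times> (\<rat> \<inter> {0..1})" using hh(3-5) by auto
    then have "(1 - t) *\<^sub>R q + t *\<^sub>R r \<in> (\<lambda>(q, r, t). (1 - t) *\<^sub>R q + t *\<^sub>R r) ` (Qs F d (max k l) \<times> Qs F d (max k l) \<times> (\<rat> \<inter> {0..1}))"
      by (rule rev_image_eqI) simp
    then have "(1 - t) *\<^sub>R q + t *\<^sub>R r \<in> Qs F d (Suc (max k l))" by (simp only: Qs.simps) blast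
    then show ?thesis unfolding Q_def by blast
  qed
  have cv: "convex (closure Q)"
    unfolding convex_alt
  proof (intro ballI allI impI)
    fix x y and u :: real assume x: "x \<in> closure Q" and y: "y \<in> closure Q" and u: "0 \<le> u \<and> u \<le> 1"
    obtain a where a: "\<forall>n. a n \<in> Q" "a \<longlonglongrightarrow> x" using x unfolding closure_sequential by blast
    obtain b where b: "\<forall>n. b n \<in> Q" "b \<longlonglongrightarrow> y" using y unfolding closure_sequential by blast
    obtain t where t: "\<And>n. t n \<in> \<rat>" "\<And>n. 0 \<le> t n" "\<And>n. t n \<le> 1" "t \<longlonglongrightarrow> u"
      using rat_approx u by blast
    have "\<forall>n. (1 - t n) *\<^sub>R a n + t n *\<^sub>R b n \<in> Q" using comb a b t by blast
    moreover have "(\<lambda>n. (1 - t n) *\<^sub>R a n + t n *\<^sub>R b n) \<longlonglongrightarrow> (1 - u) *\<^sub>R x + u *\<^sub>R y"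
      using a b t by (intro tendsto_intros) auto
    ultimately show "(1 - u) *\<^sub>R x + u *\<^sub>R y \<in> closure Q"
      unfolding closure_sequential by (intro exI[of _ "\<lambda>n. (1 - t n) *\<^sub>R a n + t n *\<^sub>R b n"]) simp
  qed
  have inv': "F ` closure Q \<subseteq> closure Q"
  proof
    fix z assume "z \<in> F ` closure Q"
    then obtain x where x: "x \<in> closure Q" "z = F x" by blast
    obtain a where a: "\<forall>n. a n \<in> Q" "a \<longlonglongrightarrow> x" using x unfolding closure_sequential by blast
    have "weak_conv (\<lambda>n. F (a n)) (F x)"
      using a QD cQD x by (intro wc weak_conv_strong) auto
    moreover have "\<forall>n. F (a n) \<in> closure Q" using a FQ closure_subset by blast
    ultimately have "F x \<in> closure Q" by (intro weak_limit_closed_convex[OF closed_closure cv])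
    then show "z \<in> closure Q" using x by simp
  qed
  show ?thesis using Qc Qne QD cv inv' by blast
qed

primrec lst :: "('v set \<Rightarrow> 'v) \<Rightarrow> nat \<Rightarrow> 'v list" where
  "lst p 0 = []"
| "lst p (Suc n) = p (set (lst p n)) # lst p n"

lemma set_lst: "set (lst p n) = (\<lambda>m. p (set (lst p m))) ` {..<n}"
  by (induction n) (auto simp: lessThan_Suc)

context
  fixes F :: "'v::{real_inner,complete_space} \<Rightarrow> 'v" and D' :: "'v set" and e :: "nat \<Rightarrow> 'v" and R :: real
  assumes cl: "closed D'" and cv: "convex D'" and ne: "D' \<noteq> {}" and bnd: "\<And>x. x \<in> D' \<Longrightarrow> norm x \<le> R"
    and inv: "F ` D' \<subseteq> D'"
    and wc: "\<And>x y. (\<forall>n. x n \<in> D') \<Longrightarrow> y \<in> D' \<Longrightarrow> weak_conv x y \<Longrightarrow> weak_conv (\<lambda>n. F (x n)) (F y)"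
    and eb: "\<And>k. norm (e k) \<le> R"
begin

lemma diff_bound: "x \<in> D' \<Longrightarrow> y \<in> D' \<Longrightarrow> norm (x - y) \<le> 2 * R"
  using bnd[of x] bnd[of y] norm_triangle_ineq4[of x y] by linarith

lemma tb:
  assumes eps: "eps > 0"
  shows "\<exists>N. finite N \<and> N \<noteq> {} \<and> N \<subseteq> D' \<and> (\<forall>y\<in>F ` D'. \<exists>p\<in>N. rho e (y - p) < eps)"
proof (rule ccontr)
  assume neg: "\<not> ?thesis"
  have FDne: "F ` D' \<noteq> {}" using ne by blast
  have ex: "\<exists>y\<in>F ` D'. \<forall>p\<in>N. rho e (y - p) \<ge> eps" if "finite N" "N \<subseteq> F ` D'" for N
  proof (cases "N = {}")
    case True then show ?thesis using FDne by auto
  next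
    case False
    have "N \<subseteq> D'" using that(2) inv by blast
    then show ?thesis using neg that(1) False by (auto simp: not_less)
  qed
  define p where "p N = (SOME y. y \<in> F ` D' \<and> (\<forall>q\<in>N. rho e (y - q) \<ge> eps))" for N
  define y where "y n = p (set (lst p n))" for n
  have sety: "set (lst p n) = y ` {..<n}" for n unfolding y_def by (rule set_lst)
  have yprop: "y n \<in> F ` D' \<and> (\<forall>m<n. rho e (y n - y m) \<ge> eps)" for n
  proof (induction n rule: less_induct)
    case (less n)
    have "set (lst p n) \<subseteq> F ` D'" using less sety by auto
    then have "\<exists>z. z \<in> F ` D' \<and> (\<forall>q\<in>set (lst p n). rho e (z - q) \<ge> eps)" using ex by blast
    then have "y n \<in> F ` D' \<and> (\<forall>q\<in>set (lst p n). rho e (y n - q) \<ge> eps)"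
      unfolding y_def p_def by (rule someI_ex)
    then show ?case using sety by auto
  qed
  have yD: "y n \<in> D'" for n using yprop inv by blast
  obtain \<sigma> w where sw: "strict_mono \<sigma>" "weak_conv (y \<circ> \<sigma>) w"
    using weak_compact[of y R] bnd yD by blast
  define z where "z n = y (\<sigma> n) - w" for n
  have zw: "weak_conv z 0"
    using weak_conv_diff[OF sw(2) weak_conv_const[of w]] by (simp add: z_def[abs_def] o_def)
  have zb: "norm (z n) \<le> R + norm w" for n
    unfolding z_def using bnd[OF yD[of "\<sigma> n"]] norm_triangle_ineq4[of "y (\<sigma> n)" w] by linarith
  have "(\<lambda>n. rho e (z n)) \<longlonglongrightarrow> 0" by (rule rho_weak[where e=e and R=R, OF eb zb zw])
  then have "\<forall>\<^sub>F n in sequentially. rho e (z n) < eps / 2" using eps by (intro order_tendstoD(2)) auto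
  then obtain N where N: "\<And>n. n \<ge> N \<Longrightarrow> rho e (z n) < eps / 2"
    unfolding eventually_sequentially by blast
  have "y (\<sigma> (Suc N)) - y (\<sigma> N) = z (Suc N) - z N" by (simp add: z_def)
  then have "rho e (y (\<sigma> (Suc N)) - y (\<sigma> N)) \<le> rho e (z (Suc N)) + rho e (z N)"
    using rho_diff[where e=e and R=R, OF eb] by simp
  also have "\<dots> < eps" using N[of N] N[of "Suc N"] by simp
  finally have "rho e (y (\<sigma> (Suc N)) - y (\<sigma> N)) < eps" .
  moreover have "\<sigma> N < \<sigma> (Suc N)" using sw(1) by (simp add: strict_mono_def)
  ultimately show False using yprop[of "\<sigma> (Suc N)"] by force
qed

lemma rho_cont:
  assumes x: "\<forall>n. x n \<in> D'" "x \<longlonglongrightarrow> a" "a \<in> D'"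
  shows "(\<lambda>n. rho e (F (x n) - q)) \<longlonglongrightarrow> rho e (F a - q)"
proof -
  have w: "weak_conv (\<lambda>n. F (x n)) (F a)" using x by (intro wc weak_conv_strong) auto
  have FD: "F (x n) \<in> D'" "F a \<in> D'" for n using x inv by auto
  define z where "z n = F (x n) - F a" for n
  have zw: "weak_conv z 0" using weak_conv_diff[OF w weak_conv_const[of "F a"]] by (simp add: z_def[abs_def])
  have zb: "norm (z n) \<le> 2 * R" for n unfolding z_def using diff_bound FD by blast
  have z0: "(\<lambda>n. rho e (z n)) \<longlonglongrightarrow> 0" by (rule rho_weak[where e=e and R=R, OF eb zb zw])
  have "(\<lambda>n. rho e (F (x n) - q) - rho e (F a - q)) \<longlonglongrightarrow> 0"
  proof (rule Lim_null_comparison[OF _ z0])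
    show "\<forall>\<^sub>F n in sequentially. norm (rho e (F (x n) - q) - rho e (F a - q)) \<le> rho e (z n)"
    proof (intro always_eventually allI)
      fix n
      have e1: "F (x n) - q = (F a - q) + z n" and e2: "F a - q = (F (x n) - q) - z n" by (simp_all add: z_def)
      have "rho e (F (x n) - q) \<le> rho e (F a - q) + rho e (z n)"
        using rho_add[where e=e and R=R, OF eb, where a="F a - q" and b="z n"] unfolding e1 .
      moreover have "rho e (F a - q) \<le> rho e (F (x n) - q) + rho e (z n)"
        using rho_diff[where e=e and R=R, OF eb, where a="F (x n) - q" and b="z n"] unfolding e2 .
      ultimately show "norm (rho e (F (x n) - q) - rho e (F a - q)) \<le> rho e (z n)" by simp
    qed
  qed
  then show ?thesis by (rule LIM_zero_cancel)
qed

lemma approx: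
  assumes eps: "eps > 0"
  shows "\<exists>x\<in>D'. rho e (x - F x) \<le> eps"
proof -
  obtain N where N: "finite N" "N \<noteq> {}" "N \<subseteq> D'" "\<forall>y\<in>F ` D'. \<exists>p\<in>N. rho e (y - p) < eps"
    using tb[OF eps] by blast
  define \<mu> where "\<mu> p y = max 0 (eps - rho e (y - p))" for p y
  define S where "S y = (\<Sum>p\<in>N. \<mu> p y)" for y
  define Qm where "Qm y = (\<Sum>p\<in>N. (\<mu> p y / S y) *\<^sub>R p)" for y
  have mu0: "\<mu> p y \<ge> 0" for p y by (simp add: \<mu>_def)
  have Spos: "S y > 0" if hy: "y \<in> F ` D'" for y
  proof -
    obtain p where p: "p \<in> N" "rho e (y - p) < eps" using N(4) hy by blast
    have "\<mu> p y > 0" using p(2) by (simp add: \<mu>_def)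
    then show ?thesis unfolding S_def using N(1) p(1) mu0 by (intro sum_pos2) auto
  qed
  let ?P = "convex hull N"
  have PD: "?P \<subseteq> D'" using N(3) cv by (simp add: hull_minimal)
  have QmP: "Qm y \<in> ?P" if "y \<in> F ` D'" for y
  proof -
    have A: "(\<Sum>p\<in>N. \<mu> p y / S y) = 1" using Spos[OF that] by (simp add: S_def sum_divide_distrib[symmetric])
    have B: "\<forall>p\<in>N. 0 \<le> \<mu> p y / S y" using mu0 Spos[OF that] by (simp add: less_imp_le)
    show ?thesis unfolding convex_hull_finite[OF N(1)] Qm_def mem_Collect_eq
      by (rule exI[of _ "\<lambda>p. \<mu> p y / S y"]) (use A B in simp)
  qed
  have Qmclose: "rho e (Qm y - y) \<le> eps" if "y \<in> F ` D'" for y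
  proof -
    define w where "w p = \<mu> p y / S y" for p
    have w1: "(\<Sum>p\<in>N. w p) = 1" using Spos[OF that] by (simp add: w_def S_def sum_divide_distrib[symmetric])
    have w0: "w p \<ge> 0" for p using mu0 Spos[OF that] by (simp add: w_def less_imp_le)
    have "Qm y - y = (\<Sum>p\<in>N. w p *\<^sub>R p) - (\<Sum>p\<in>N. w p) *\<^sub>R y" using w1 by (simp add: Qm_def w_def)
    also have "\<dots> = (\<Sum>p\<in>N. w p *\<^sub>R (p - y))"
      by (simp add: scaleR_sum_left sum_subtractf scaleR_diff_right)
    finally have "rho e (Qm y - y) \<le> (\<Sum>p\<in>N. rho e (w p *\<^sub>R (p - y)))"
      using rho_sum[where e=e and R=R, OF eb N(1)] by simp
    also have "\<dots> = (\<Sum>p\<in>N. w p * rho e (p - y))" using rho_scale[where e=e and R=R, OF eb] w0 by simp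
    also have "\<dots> \<le> (\<Sum>p\<in>N. w p * eps)"
    proof (rule sum_mono)
      fix p assume "p \<in> N"
      show "w p * rho e (p - y) \<le> w p * eps"
      proof (cases "\<mu> p y > 0")
        case True
        then have "rho e (y - p) < eps" by (simp add: \<mu>_def)
        then have "rho e (p - y) \<le> eps" using rho_commute[where e=e and R=R, OF eb, where a=p and b=y] by simp
        then show ?thesis using w0[of p] by (simp add: mult_left_mono)
      next
        case False
        then have "\<mu> p y = 0" using mu0[of p y] by simp
        then show ?thesis by (simp add: w_def)
      qed
    qed
    also have "\<dots> = eps" using w1 by (simp add: sum_distrib_right[symmetric])
    finally show ?thesis .
  qed
  have gc: "continuous_on ?P (\<lambda>x. Qm (F x))"
  proof (rule continuous_on_sequentiallyI)
    fix u a assume u: "\<forall>n. u n \<in> ?P" "a \<in> ?P" "u \<longlonglongrightarrow> a"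
    have uD: "\<forall>n. u n \<in> D'" "a \<in> D'" using u PD by auto
    have Sa: "S (F a) \<noteq> 0" using Spos uD(2) by force
    have mu_t: "(\<lambda>n. \<mu> p (F (u n))) \<longlonglongrightarrow> \<mu> p (F a)" for p
      unfolding \<mu>_def by (intro tendsto_intros rho_cont uD u(3))
    have S_t: "(\<lambda>n. S (F (u n))) \<longlonglongrightarrow> S (F a)"
      unfolding S_def by (intro tendsto_sum mu_t)
    show "(\<lambda>n. Qm (F (u n))) \<longlonglongrightarrow> Qm (F a)"
      unfolding Qm_def by (intro tendsto_sum tendsto_scaleR tendsto_divide mu_t S_t tendsto_const Sa)
  qed
  have gi: "(\<lambda>x. Qm (F x)) ` ?P \<subseteq> ?P" using QmP PD inv by blast
  obtain x where x: "x \<in> ?P" "Qm (F x) = x" using brouwer_hull[OF N(1,2) gc gi] by blast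
  have "F x \<in> F ` D'" using x(1) PD by blast
  then have "rho e (Qm (F x) - F x) \<le> eps" by (rule Qmclose)
  then show ?thesis using x PD by auto
qed

lemma fix_rho0: "\<exists>x\<in>D'. rho e (x - F x) = 0"
proof -
  have "\<forall>n. \<exists>x\<in>D'. rho e (x - F x) \<le> 1 / real (Suc n)" using approx by simp
  then obtain xs where xs: "\<And>n. xs n \<in> D'" "\<And>n. rho e (xs n - F (xs n)) \<le> 1 / real (Suc n)"
    by metis
  obtain \<sigma> x where sx: "strict_mono \<sigma>" "weak_conv (xs \<circ> \<sigma>) x"
    using weak_compact[of xs R] bnd xs(1) by blast
  have xD: "x \<in> D'" using weak_limit_closed_convex[OF cl cv _ sx(2)] xs(1) by simp
  have Fw: "weak_conv (\<lambda>n. F (xs (\<sigma> n))) (F x)" using sx(2) xs(1) xD by (intro wc) (auto simp: o_def)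
  define a where "a n = xs (\<sigma> n) - F (xs (\<sigma> n))" for n
  define z where "z n = a n - (x - F x)" for n
  have aw: "weak_conv a (x - F x)" unfolding a_def[abs_def]
    using weak_conv_diff[OF sx(2) Fw] by (simp add: o_def)
  have zw: "weak_conv z 0" unfolding z_def[abs_def]
    using weak_conv_diff[OF aw weak_conv_const[of "x - F x"]] by simp
  have FD: "F y \<in> D'" if "y \<in> D'" for y using inv that by blast
  have zb: "norm (z n) \<le> 2 * R + 2 * R" for n
  proof -
    have "norm (a n) \<le> 2 * R" unfolding a_def using diff_bound xs(1) FD by blast
    moreover have "norm (x - F x) \<le> 2 * R" using diff_bound xD FD by blast
    ultimately show ?thesis unfolding z_def using norm_triangle_ineq4[of "a n" "x - F x"] by linarith
  qed
  have z0: "(\<lambda>n. rho e (z n)) \<longlonglongrightarrow> 0" by (rule rho_weak[where e=e and R=R, OF eb zb zw])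
  have up: "rho e (x - F x) \<le> 1 / real (Suc (\<sigma> n)) + rho e (z n)" for n
  proof -
    have "x - F x = a n - z n" by (simp add: z_def)
    then have "rho e (x - F x) \<le> rho e (a n) + rho e (z n)" using rho_diff[where e=e and R=R, OF eb] by simp
    then show ?thesis using xs(2)[of "\<sigma> n"] by (simp add: a_def)
  qed
  have "(\<lambda>n. 1 / real (Suc (\<sigma> n)) + rho e (z n)) \<longlonglongrightarrow> 0 + 0"
  proof (intro tendsto_add z0)
    have "(\<lambda>n. 1 / real (Suc n)) \<longlonglongrightarrow> 0"
      using LIMSEQ_inverse_real_of_nat by (simp add: inverse_eq_divide)
    from LIMSEQ_subseq_LIMSEQ[OF this sx(1)] show "(\<lambda>n. 1 / real (Suc (\<sigma> n))) \<longlonglongrightarrow> 0"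
      by (simp add: o_def)
  qed
  then have "rho e (x - F x) \<le> 0"
    using up by (intro tendsto_lowerbound[of "\<lambda>n. 1 / real (Suc (\<sigma> n)) + rho e (z n)"]) auto
  then show ?thesis using xD rho_nonneg[where e=e and R=R, OF eb, where z="x - F x"] by force
qed

end

lemma weak_fixpoint:
  fixes F :: "'v::{real_inner,complete_space} \<Rightarrow> 'v"
  assumes D: "closed D" "convex D" "D \<noteq> {}" "bounded D" and inv: "F ` D \<subseteq> D"
    and wc: "\<And>x y. (\<forall>n. x n \<in> D) \<Longrightarrow> y \<in> D \<Longrightarrow> weak_conv x y \<Longrightarrow> weak_conv (\<lambda>n. F (x n)) (F y)"
  shows "\<exists>x\<in>D. F x = x"
proof -
  obtain d where d: "d \<in> D" using D(3) by blast
  obtain Q where Q: "countable Q" "Q \<noteq> {}" "Q \<subseteq> D" "convex (closure Q)" "F ` closure Q \<subseteq> closure Q"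
    using sep_reduction[OF D(1,2) d inv wc] by blast
  obtain R where R: "\<And>x. x \<in> D \<Longrightarrow> norm x \<le> R" using D(4) bounded_iff by blast
  have cQD: "closure Q \<subseteq> D" using Q(3) D(1) closure_minimal by blast
  define e where "e = from_nat_into Q"
  have re: "range e = Q" unfolding e_def using Q(1,2) by simp
  have eb: "norm (e k) \<le> R" for k using re Q(3) R by blast
  obtain x where x: "x \<in> closure Q" "rho e (x - F x) = 0"
    using fix_rho0[of "closure Q" R F e] Q(2,4,5) cQD R eb wc by (auto simp: subset_iff)
  have orth: "inner q (x - F x) = 0" if "q \<in> closure Q" for q
  proof -
    have "Q \<subseteq> {q. inner q (x - F x) = 0}" using rho_zero[where e=e and R=R, OF eb x(2)] re by auto
    moreover have "closed {q. inner q (x - F x) = 0}" by (intro closed_Collect_eq continuous_intros)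
    ultimately have "closure Q \<subseteq> {q. inner q (x - F x) = 0}" by (rule closure_minimal)
    then show ?thesis using that by blast
  qed
  have "F x \<in> closure Q" using x(1) Q(5) by blast
  then have "inner (x - F x) (x - F x) = 0" using orth[OF x(1)] orth[of "F x"] by (simp add: inner_diff_left)
  then have "F x = x" by simp
  then show ?thesis using x(1) cQD by blast
qed

context
  fixes C :: "'v::{real_inner,complete_space} set" and K :: "'v \<Rightarrow> 'v set"
    and B :: "'v \<Rightarrow> 'v \<Rightarrow> real" and m :: "'v \<Rightarrow> real" and C0 :: "'v set" and \<alpha> :: real
  assumes C: "closed C" "convex C" "C \<noteq> {}" and hK: "hyp_K C K"
    and Bb: "bounded_bilinear B" and al: "\<alpha> > 0" and coer: "\<And>v. B v v \<ge> \<alpha> * (norm v)\<^sup>2"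
    and m: "bounded_linear m" and C0: "bounded C0" "\<forall>u\<in>C. K u \<inter> C0 \<noteq> {}"
begin

lemma hK1: "u \<in> C \<Longrightarrow> K u \<subseteq> C \<and> K u \<noteq> {} \<and> closed (K u) \<and> convex (K u)"
  using hK unfolding hyp_K_def by blast

lemma hK2: "(\<forall>n. x n \<in> C) \<Longrightarrow> xl \<in> C \<Longrightarrow> weak_conv x xl \<Longrightarrow> y \<in> K xl \<Longrightarrow>
    \<exists>yn. (\<forall>n. yn n \<in> C \<and> yn n \<in> K (x n)) \<and> yn \<longlonglongrightarrow> y"
  using hK unfolding hyp_K_def by blast

lemma hK3: "(\<forall>n. x n \<in> C) \<Longrightarrow> (\<forall>n. y n \<in> C) \<Longrightarrow> (\<forall>n. y n \<in> K (x n)) \<Longrightarrow>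
    xl \<in> C \<Longrightarrow> weak_conv x xl \<Longrightarrow> weak_conv y yl \<Longrightarrow> yl \<in> K xl"
  using hK unfolding hyp_K_def by blast

lemma pos: "B w w \<ge> 0"
  using coer[of w] al by (smt (verit) mult_nonneg_nonneg zero_le_power2)

lemma sol_exists: assumes "w \<in> C" shows "\<exists>u\<in>K w. \<forall>v\<in>K w. B u (v - u) \<ge> m (v - u)"
  using hK1[OF assms] by (intro stampacchia[OF Bb al coer m]) auto

lemma sol_unique:
  "u1 \<in> K w \<Longrightarrow> \<forall>v\<in>K w. B u1 (v - u1) \<ge> m (v - u1) \<Longrightarrow>
   u2 \<in> K w \<Longrightarrow> \<forall>v\<in>K w. B u2 (v - u2) \<ge> m (v - u2) \<Longrightarrow> u1 = u2"
  using stampacchia_unique[OF Bb al coer m] by blast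

lemma sol_bound: "\<exists>Rb. \<forall>w\<in>C. \<forall>u. u \<in> K w \<and> (\<forall>v\<in>K w. B u (v - u) \<ge> m (v - u)) \<longrightarrow> norm u \<le> Rb"
proof -
  interpret B: bounded_bilinear B by (rule Bb)
  interpret m: bounded_linear m by (rule m)
  obtain R0 where R0: "\<And>c. c \<in> C0 \<Longrightarrow> norm c \<le> R0" using C0(1) bounded_iff by blast
  obtain KB where KB: "\<And>a b. norm (B a b) \<le> norm a * norm b * KB" "KB > 0" using B.pos_bounded by blast
  obtain Km where Km: "\<And>x. norm (m x) \<le> norm x * Km" "Km > 0" using m.pos_bounded by blast
  define X where "X = KB * R0 + Km + Km * R0"
  have "\<forall>w\<in>C. \<forall>u. u \<in> K w \<and> (\<forall>v\<in>K w. B u (v - u) \<ge> m (v - u)) \<longrightarrow> norm u \<le> max 1 (X / \<alpha>)"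
  proof (intro ballI allI impI)
    fix w u assume w: "w \<in> C" and u: "u \<in> K w \<and> (\<forall>v\<in>K w. B u (v - u) \<ge> m (v - u))"
    obtain c where c: "c \<in> K w" "c \<in> C0" using C0(2) w by blast
    have R00: "R0 \<ge> 0" using R0[OF c(2)] norm_ge_zero order_trans by blast
    have cR: "norm c \<le> R0" using R0 c by blast
    let ?t = "norm u"
    have "B u (c - u) \<ge> m (c - u)" using u c by blast
    then have "B u u \<le> B u c - m c + m u" by (simp add: B.diff_right m.diff)
    also have "\<dots> \<le> ?t * R0 * KB + R0 * Km + ?t * Km"
    proof -
      have "B u c \<le> ?t * norm c * KB" using KB(1)[of u c] by simp
      also have "\<dots> \<le> ?t * R0 * KB" using cR KB(2) by (intro mult_right_mono mult_left_mono) auto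
      finally have 1: "B u c \<le> ?t * R0 * KB" .
      have "- m c \<le> norm c * Km" using Km(1)[of c] by simp
      also have "\<dots> \<le> R0 * Km" using cR Km(2) by (intro mult_right_mono) auto
      finally have 2: "- m c \<le> R0 * Km" .
      have 3: "m u \<le> ?t * Km" using Km(1)[of u] by simp
      show ?thesis using 1 2 3 by linarith
    qed
    finally have main: "\<alpha> * ?t\<^sup>2 \<le> ?t * R0 * KB + R0 * Km + ?t * Km" using coer[of u] by linarith
    show "?t \<le> max 1 (X / \<alpha>)"
    proof (cases "?t \<le> 1")
      case True then show ?thesis by simp
    next
      case False
      have "R0 * Km \<ge> 0" using R00 Km(2) by simp
      then have "1 * (R0 * Km) \<le> ?t * (R0 * Km)" using False by (intro mult_right_mono) auto
      then have "R0 * Km \<le> R0 * Km * ?t" by (simp add: mult.commute)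
      then have "\<alpha> * ?t * ?t \<le> X * ?t" using main unfolding X_def by (simp add: power2_eq_square algebra_simps)
      then have "\<alpha> * ?t \<le> X" using False by (auto simp: mult_le_cancel_right)
      then have "?t \<le> X / \<alpha>" using al by (simp add: field_simps)
      then show ?thesis by simp
    qed
  qed
  then show ?thesis by blast
qed

definition "Phi w = (SOME u. u \<in> K w \<and> (\<forall>v\<in>K w. B u (v - u) \<ge> m (v - u)))"

lemma Phi_sol: assumes "w \<in> C" shows "Phi w \<in> K w \<and> (\<forall>v\<in>K w. B (Phi w) (v - Phi w) \<ge> m (v - Phi w))"
proof -
  have "\<exists>u. u \<in> K w \<and> (\<forall>v\<in>K w. B u (v - u) \<ge> m (v - u))" using sol_exists[OF assms] by blast
  then show ?thesis unfolding Phi_def by (rule someI_ex)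
qed

lemma limit_sol:
  assumes x: "\<forall>n. x n \<in> C" "xl \<in> C" "weak_conv x xl"
    and u: "\<And>n. u n \<in> K (x n)" "\<And>n. \<forall>v\<in>K (x n). B (u n) (v - u n) \<ge> m (v - u n)"
    and M: "\<And>n. norm (u n) \<le> M" and uw: "weak_conv u ul"
  shows "ul \<in> K xl \<and> (\<forall>v\<in>K xl. B ul (v - ul) \<ge> m (v - ul))"
proof
  have uC: "\<forall>n. u n \<in> C" using u(1) hK1 x(1) by blast
  show "ul \<in> K xl" using hK3[OF x(1) uC _ x(2,3) uw] u(1) by blast
  show "\<forall>v\<in>K xl. B ul (v - ul) \<ge> m (v - ul)"
  proof
    fix v assume v: "v \<in> K xl"
    obtain vn where vn: "\<forall>n. vn n \<in> C \<and> vn n \<in> K (x n)" "vn \<longlonglongrightarrow> v" using hK2[OF x v] by blast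
    show "B ul (v - ul) \<ge> m (v - ul)"
      by (rule vi_limit[OF Bb pos m uw M vn(2)]) (use u(2) vn(1) in blast)
  qed
qed

lemma Phi_wc:
  assumes x: "\<forall>n. x n \<in> C" "xl \<in> C" "weak_conv x xl"
  shows "weak_conv (\<lambda>n. Phi (x n)) (Phi xl)"
proof (rule ccontr)
  assume "\<not> ?thesis"
  then obtain z where nz: "\<not> (\<lambda>n. inner z (Phi (x n))) \<longlonglongrightarrow> inner z (Phi xl)"
    unfolding weak_conv_iff by blast
  obtain eps where eps: "eps > 0" "\<not> eventually (\<lambda>n. dist (inner z (Phi (x n))) (inner z (Phi xl)) < eps) sequentially"
    using nz unfolding tendsto_iff by blast
  define I where "I = {n. \<not> dist (inner z (Phi (x n))) (inner z (Phi xl)) < eps}"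
  have infI: "infinite I" using eps(2) unfolding I_def cofinite_eq_sequentially[symmetric] eventually_cofinite by simp
  define \<sigma> where "\<sigma> = enumerate I"
  have sm: "strict_mono \<sigma>" unfolding \<sigma>_def using infI by (rule strict_mono_enumerate)
  have sI: "\<sigma> n \<in> I" for n unfolding \<sigma>_def using infI by (rule enumerate_in_set)
  obtain Rb where Rb: "\<forall>w\<in>C. \<forall>u. u \<in> K w \<and> (\<forall>v\<in>K w. B u (v - u) \<ge> m (v - u)) \<longrightarrow> norm u \<le> Rb"
    using sol_bound by blast
  have bnd: "norm (Phi (x n)) \<le> Rb" for n using Rb Phi_sol x(1) by blast
  obtain \<tau> ul where tu: "strict_mono \<tau>" "weak_conv ((\<lambda>n. Phi (x (\<sigma> n))) \<circ> \<tau>) ul"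
    using weak_compact[of "\<lambda>n. Phi (x (\<sigma> n))" Rb] bnd by blast
  define r where "r = \<sigma> \<circ> \<tau>"
  have rm: "strict_mono r" unfolding r_def using sm tu(1) by (rule strict_mono_o)
  have xr: "weak_conv (x \<circ> r) xl" using weak_conv_subseq[OF x(3) rm] .
  have "ul \<in> K xl \<and> (\<forall>v\<in>K xl. B ul (v - ul) \<ge> m (v - ul))"
  proof (rule limit_sol[of "x \<circ> r" xl "\<lambda>n. Phi (x (r n))" Rb])
    show "\<forall>n. (x \<circ> r) n \<in> C" using x(1) by simp
    show "xl \<in> C" by (rule x(2))
    show "weak_conv (x \<circ> r) xl" by (rule xr)
    show "\<And>n. Phi (x (r n)) \<in> K ((x \<circ> r) n)" using Phi_sol x(1) by simp
    show "\<And>n. \<forall>v\<in>K ((x \<circ> r) n). B (Phi (x (r n))) (v - Phi (x (r n))) \<ge> m (v - Phi (x (r n)))"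
      using Phi_sol x(1) by simp
    show "\<And>n. norm (Phi (x (r n))) \<le> Rb" by (rule bnd)
    show "weak_conv (\<lambda>n. Phi (x (r n))) ul" using tu(2) by (simp add: r_def o_def)
  qed
  then have "ul = Phi xl" using Phi_sol[OF x(2)] sol_unique by blast
  then have "weak_conv (\<lambda>n. Phi (x (r n))) (Phi xl)" using tu(2) by (simp add: r_def o_def)
  then have lim: "(\<lambda>n. inner z (Phi (x (r n)))) \<longlonglongrightarrow> inner z (Phi xl)" unfolding weak_conv_iff by blast
  have "r n \<in> I" for n unfolding r_def using sI by simp
  then have far: "\<not> dist (inner z (Phi (x (r n)))) (inner z (Phi xl)) < eps" for n unfolding I_def by blast
  from lim eps(1) have "eventually (\<lambda>n. dist (inner z (Phi (x (r n)))) (inner z (Phi xl)) < eps) sequentially"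
    unfolding tendsto_iff by blast
  then show False using far by (simp add: eventually_sequentially)
qed

lemma sol_set:
  defines "S \<equiv> {u \<in> C. u \<in> K u \<and> (\<forall>v\<in>K u. B u (v - u) \<ge> m (v - u))}"
  shows "S \<noteq> {} \<and> bounded S \<and> weakly_closed S"
proof (intro conjI)
  obtain Rb where Rb: "\<forall>w\<in>C. \<forall>u. u \<in> K w \<and> (\<forall>v\<in>K w. B u (v - u) \<ge> m (v - u)) \<longrightarrow> norm u \<le> Rb"
    using sol_bound by blast
  define D where "D = C \<inter> cball 0 Rb"
  have PhiD: "Phi w \<in> D" if "w \<in> C" for w
    using Phi_sol[OF that] Rb that hK1[OF that] unfolding D_def by auto
  obtain c where c: "c \<in> C" using C(3) by blast
  have "\<exists>x\<in>D. Phi x = x"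
  proof (rule weak_fixpoint)
    show "closed D" unfolding D_def using C(1) by (intro closed_Int closed_cball)
    show "convex D" unfolding D_def using C(2) by (intro convex_Int convex_cball)
    show "bounded D" unfolding D_def by (intro bounded_Int) auto
    show "D \<noteq> {}" using PhiD[OF c] by blast
    show "Phi ` D \<subseteq> D" using PhiD unfolding D_def by auto
    show "weak_conv (\<lambda>n. Phi (x n)) (Phi y)" if "\<forall>n. x n \<in> D" "y \<in> D" "weak_conv x y" for x y
      using Phi_wc that unfolding D_def by auto
  qed
  then obtain x where "x \<in> D" "Phi x = x" by blast
  then have "x \<in> S" using Phi_sol[of x] unfolding S_def D_def by auto
  then show "S \<noteq> {}" by blast
  show "bounded S" unfolding bounded_iff S_def using Rb by blast
  show "weakly_closed S" unfolding weakly_closed_def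
  proof (intro allI impI)
    fix x y assume xs: "\<forall>n. x n \<in> S" and w: "weak_conv x y"
    have xC: "\<forall>n. x n \<in> C" using xs S_def by blast
    have yC: "y \<in> C" using weak_limit_closed_convex[OF C(1,2) xC w] .
    have "y \<in> K y \<and> (\<forall>v\<in>K y. B y (v - y) \<ge> m (v - y))"
    proof (rule limit_sol[OF xC yC w])
      show "\<And>n. x n \<in> K (x n)" "\<And>n. \<forall>v\<in>K (x n). B (x n) (v - x n) \<ge> m (v - x n)"
        using xs S_def by auto
      show "\<And>n. norm (x n) \<le> Rb" using xs Rb S_def by blast
      show "weak_conv x y" by (rule w)
    qed
    then show "y \<in> S" using yC S_def by blast
  qed
qed

end

theorem corollary2p4:
  fixes C :: "'v::{real_inner, complete_space} set"
    and K :: "'v \<Rightarrow> 'v set"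
    and A :: "'b::banach set"
    and m :: "'v \<Rightarrow> real"
    and C0 :: "'v set"
    and T :: "'b \<Rightarrow> 'v \<Rightarrow> 'v \<Rightarrow> real"
    and \<alpha> \<beta> :: real
  assumes "C \<noteq> {}" and "closed C" and "convex C"
    and "bounded_linear m"
    and "hyp_K C K"
    and "bounded C0" and "\<forall>u\<in>C. K u \<inter> C0 \<noteq> {}"
    and "trilinear T"
    and "\<alpha> > 0" and "\<beta> > 0"
    and "\<forall>a u v. \<bar>T a u v\<bar> \<le> \<beta> * norm a * norm u * norm v"
    and "\<forall>a\<in>A. \<forall>v. T a v v \<ge> \<alpha> * (norm v)\<^sup>2"
    and "a \<in> A"
  shows "let S = {u \<in> C. u \<in> K u \<and> (\<forall>v\<in>K u. T a u (v - u) \<ge> m (v - u))}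
         in S \<noteq> {} \<and> bounded S \<and> weakly_closed S"
proof -
  have L2: "\<And>v. linear (\<lambda>u. T a u v)" and L3: "\<And>u. linear (\<lambda>v. T a u v)"
    using assms(8) unfolding trilinear_def by blast+
  have Bb: "bounded_bilinear (T a)"
  proof
    show "T a (x + y) z = T a x z + T a y z" for x y z using L2[of z] by (simp add: linear_iff)
    show "T a x (y + z) = T a x y + T a x z" for x y z using L3[of x] by (simp add: linear_iff)
    show "T a (r *\<^sub>R x) y = r *\<^sub>R T a x y" for r x y using L2[of y] by (simp add: linear_iff)
    show "T a x (r *\<^sub>R y) = r *\<^sub>R T a x y" for r x y using L3[of x] by (simp add: linear_iff)
    show "\<exists>K. \<forall>x y. norm (T a x y) \<le> norm x * norm y * K"
      using assms(11) by (intro exI[of _ "\<beta> * norm a"]) (simp add: mult_ac)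
  qed
  have coer: "\<And>v. T a v v \<ge> \<alpha> * (norm v)\<^sup>2" using assms(12,13) by blast
  show ?thesis unfolding Let_def
    by (rule sol_set[OF assms(2,3,1,5) Bb assms(9) coer assms(4,6,7)])
qed

end
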